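(* Let $\Gamma$ be a regular $N\times 2$ potential game with potential $u$. Then the set $\mathrm{NE}$ of Nash equilibria of $\Gamma$ is finite. Moreover, there exists $\lambda_0>0$ and, for each $x^*\in\mathrm{NE}$, a continuous function $\lambda\mapsto x^{\lambda}(x^* )$ from $(0,\lambda_0)$ into $\Delta=[0,1]^N$ with the following properties. For every $\lambda\in(0,\lambda_0)$, the points $x^{\lambda}(x^* )$, $x^*\in\mathrm{NE}$, are pairwise distinct and $\mathrm{ND}(\lambda)=\{x^{\lambda}(x^* ):x^*\in\mathrm{NE}\}$. For every $x^*\in\mathrm{NE}$, $x^{\lambda}(x^* )\to x^*$ as $\lambda\to 0$. In particular, $\mathrm{ND}(\lambda)$ is finite and in one-to-one correspondence with $\mathrm{NE}$ for every $\lambda\in(0,\lambda_0)$.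
   Context: An $N\times 2$ game has players $i=1,\dots,N$, each with action set $A_i=\{a_i^1,a_i^2\}$, and utilities $u_i:A_1\times\cdots\times A_N\to\mathbb{R}$. It is a potential game with potential $u:A_1\times\cdots\times A_N\to\mathbb{R}$ if $u(a_i,a_{-i})-u(a_i',a_{-i})=u_i(a_i,a_{-i})-u_i(a_i',a_{-i})$ for all $i$, all $a_i,a_i'\in A_i$ and all $a_{-i}$. A mixed strategy of player $i$ is a number $x_i\in[0,1]$, the probability of playing $a_i^1$. Joint mixed strategies form $\Delta=[0,1]^N$. The multilinear extension of the potential is $$U(x)=\sum_{k_1,\dots,k_N\in\{1,2\}} z_1^{k_1}(x_1)\cdots z_N^{k_N}(x_N)\,u(a_1^{k_1},\dots,a_N^{k_N}),$$ where $z_i^1(x_i)=x_i$ and $z_i^2(x_i)=1-x_i$. We write $U(a_i^k,x_{-i})$ for the value of $U$ when player $i$ plays $a_i^k$ with probability 1 and the others play $x_{-i}$. The set of Nash equilibria is $\mathrm{NE}=\{x\in\Delta: U(x_i,x_{-i})\ge U(x_i',x_{-i})\ \text{for all } i \text{ and all } x_i'\in[0,1]\}$. For $\lambda>0$, the logit (smoothed) best response is $$\widehat{BR}^\lambda_i(x)=\frac{\exp(U(a_i^1,x_{-i})/\lambda)}{\sum_{k=1,2}\exp(U(a_i^k,x_{-i})/\lambda)},\qquad \widehat{BR}^\lambda(x)=(\widehat{BR}^\lambda_1(x),\dots,\widehat{BR}^\lambda_N(x)).$$ The set of Nash distributions is $\mathrm{ND}(\lambda)=\{x\in\Delta: x=\widehat{BR}^\lambda(x)\}$.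 Regularity. Let $x^*\in\mathrm{NE}$, and relabel each player's two actions so that $x_i^*>0$ for all $i$; thus each player either mixes ($0<x_i^*<1$) or plays $a_i^1$ purely ($x_i^*=1$). - $x^*$ is quasi-strict if, for every $i$ with $x_i^*=1$, the action $a_i^2$ is not a best response to $x_{-i}^*$, i.e. $U(a_i^1,x^*_{-i})>U(a_i^2,x^*_{-i})$. - Let the mixing players be $i=1,\dots,\tilde N$ after reordering. The restricted Hessian relative to $x^*$ is the $\tilde N\times\tilde N$ matrix $H(x)=\big(\partial^2 U(x)/\partial x_i\partial x_j\big)_{i,j=1,\dots,\tilde N}$, which may be evaluated at any $x\in\Delta$. - $x^*$ is regular if it is quasi-strict and $H(x^* )$ is invertible. - The potential game is regular if every Nash equilibrium is regular. *)

theory Defs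
  imports "HOL-Analysis.Analysis"
begin

text \<open>Players are the elements of a finite type 'n (so N = CARD('n)).
  A pure action profile is a function 'n => bool: True encodes a_i^1, False encodes a_i^2.
  A mixed profile is a vector x :: real^'n, x$i = probability of a_i^1.\<close>

definition is_potential :: "('n \<Rightarrow> ('n \<Rightarrow> bool) \<Rightarrow> real) \<Rightarrow> (('n \<Rightarrow> bool) \<Rightarrow> real) \<Rightarrow> bool" where
  "is_potential ui u \<longleftrightarrow>
     (\<forall>i a c. u (a(i := c)) - u a = ui i (a(i := c)) - ui i a)"

definition mixed_profiles :: "(real^'n) set" ("\<Delta>") where
  "mixed_profiles = {x. \<forall>i. 0 \<le> x$i \<and> x$i \<le> 1}"

definition zfac :: "bool \<Rightarrow> real \<Rightarrow> real" where
  "zfac k t = (if k then t else 1 - t)"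

definition Uext :: "(('n::finite \<Rightarrow> bool) \<Rightarrow> real) \<Rightarrow> real^'n \<Rightarrow> real" where
  "Uext u x = (\<Sum>a\<in>(UNIV :: ('n \<Rightarrow> bool) set). (\<Prod>i\<in>UNIV. zfac (a i) (x$i)) * u a)"

definition upd :: "real^'n \<Rightarrow> 'n \<Rightarrow> real \<Rightarrow> real^'n" where
  "upd x i t = (\<chi> j. if j = i then t else x$j)"

text \<open>U(a_i^k, x_{-i}): k = True is a_i^1, k = False is a_i^2.\<close>
definition Upure :: "(('n::finite \<Rightarrow> bool) \<Rightarrow> real) \<Rightarrow> 'n \<Rightarrow> bool \<Rightarrow> real^'n \<Rightarrow> real" where
  "Upure u i k x = Uext u (upd x i (if k then 1 else 0))"

definition NE :: "(('n::finite \<Rightarrow> bool) \<Rightarrow> real) \<Rightarrow> (real^'n) set" where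
  "NE u = {x \<in> \<Delta>. \<forall>i. \<forall>t\<in>{0..1}. Uext u x \<ge> Uext u (upd x i t)}"

definition logitBR :: "(('n::finite \<Rightarrow> bool) \<Rightarrow> real) \<Rightarrow> real \<Rightarrow> real^'n \<Rightarrow> real^'n" where
  "logitBR u lam x = (\<chi> i. exp (Upure u i True x / lam) /
        (exp (Upure u i True x / lam) + exp (Upure u i False x / lam)))"

definition ND :: "(('n::finite \<Rightarrow> bool) \<Rightarrow> real) \<Rightarrow> real \<Rightarrow> (real^'n) set" where
  "ND u lam = {x \<in> \<Delta>. x = logitBR u lam x}"

definition partial :: "'n \<Rightarrow> (real^'n \<Rightarrow> real) \<Rightarrow> real^'n \<Rightarrow> real" where
  "partial i f x = deriv (\<lambda>t. f (upd x i t)) (x$i)"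

definition mixing_players :: "real^'n \<Rightarrow> 'n set" where
  "mixing_players x = {i. 0 < x$i \<and> x$i < 1}"

definition restr_hessian :: "(('n::finite \<Rightarrow> bool) \<Rightarrow> real) \<Rightarrow> real^'n \<Rightarrow> real^'n \<Rightarrow> 'n \<Rightarrow> 'n \<Rightarrow> real" where
  "restr_hessian u xs x i j = partial i (partial j (Uext u)) x"

definition invertible_on :: "'n set \<Rightarrow> ('n \<Rightarrow> 'n \<Rightarrow> real) \<Rightarrow> bool" where
  "invertible_on M H \<longleftrightarrow> (\<exists>G. (\<forall>i\<in>M. \<forall>k\<in>M. (\<Sum>j\<in>M. H i j * G j k) = (if i = k then 1 else 0))
                            \<and> (\<forall>i\<in>M. \<forall>k\<in>M. (\<Sum>j\<in>M. G i j * H j k) = (if i = k then 1 else 0)))"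

text \<open>Quasi-strictness, stated without relabelling: a player playing a_i^1 purely (x_i = 1)
  must strictly prefer a_i^1; a player playing a_i^2 purely (x_i = 0) must strictly prefer a_i^2
  (this is the relabelled condition).\<close>
definition quasi_strict :: "(('n::finite \<Rightarrow> bool) \<Rightarrow> real) \<Rightarrow> real^'n \<Rightarrow> bool" where
  "quasi_strict u x \<longleftrightarrow>
     (\<forall>i. x$i = 1 \<longrightarrow> Upure u i True x > Upure u i False x) \<and>
     (\<forall>i. x$i = 0 \<longrightarrow> Upure u i False x > Upure u i True x)"

definition regular_NE :: "(('n::finite \<Rightarrow> bool) \<Rightarrow> real) \<Rightarrow> real^'n \<Rightarrow> bool" where
  "regular_NE u x \<longleftrightarrow> quasi_strict u x \<and>
      invertible_on (mixing_players x) (restr_hessian u x x)"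

definition regular_game :: "(('n::finite \<Rightarrow> bool) \<Rightarrow> real) \<Rightarrow> bool" where
  "regular_game u \<longleftrightarrow> (\<forall>x\<in>NE u. regular_NE u x)"

end

theory Submission imports Defs begin

lemma upd_nth: "upd x i t $ j = (if j = i then t else x $ j)"
  by (simp add: upd_def)

lemma upd_upd_same[simp]: "upd (upd x i s) i t = upd x i t"
  by (simp add: upd_def vec_eq_iff)

lemma upd_comm: "i \<noteq> j \<Longrightarrow> upd (upd x i s) j t = upd (upd x j t) i s"
  by (simp add: upd_def vec_eq_iff)

lemma upd_self[simp]: "upd x i (x $ i) = x"
  by (simp add: upd_def vec_eq_iff)

lemma zfac_lin: "zfac k t = zfac k 0 + t * (zfac k 1 - zfac k 0)"
  by (cases k) (auto simp: zfac_def)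

definition multiaff :: "(real^'n \<Rightarrow> real) \<Rightarrow> bool" where
  "multiaff f \<longleftrightarrow> (\<forall>x i t. f (upd x i t) = f (upd x i 0) + t * (f (upd x i 1) - f (upd x i 0)))"

lemma Uext_upd:
  "Uext u (upd x i t) = (\<Sum>a\<in>UNIV. zfac (a i) t * ((\<Prod>j\<in>UNIV-{i}. zfac (a j) (x$j)) * u a))"
proof -
  have "\<And>a. (\<Prod>j\<in>UNIV. zfac (a j) (upd x i t $ j)) = zfac (a i) t * (\<Prod>j\<in>UNIV-{i}. zfac (a j) (x$j))"
    by (subst prod.remove[of UNIV i]) (auto simp: upd_nth intro!: prod.cong)
  then show ?thesis unfolding Uext_def by (simp add: mult.assoc)
qed

lemma multiaff_Uext: "multiaff (Uext u)"
  unfolding multiaff_def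
proof (intro allI)
  fix x :: "real^'a" and i t
  define Q where "Q a = (\<Prod>j\<in>UNIV-{i}. zfac (a j) (x$j)) * u a" for a :: "'a \<Rightarrow> bool"
  have e: "Uext u (upd x i s) = (\<Sum>a\<in>UNIV. zfac (a i) 0 * Q a) + s * (\<Sum>a\<in>UNIV. (zfac (a i) 1 - zfac (a i) 0) * Q a)" for s
  proof -
    have "Uext u (upd x i s) = (\<Sum>a\<in>UNIV. zfac (a i) s * Q a)"
      unfolding Uext_upd Q_def by simp
    also have "\<dots> = (\<Sum>a\<in>UNIV. zfac (a i) 0 * Q a + s * ((zfac (a i) 1 - zfac (a i) 0) * Q a))"
      by (rule sum.cong[OF refl], subst zfac_lin, simp only: distrib_right mult.assoc)
    also have "\<dots> = (\<Sum>a\<in>UNIV. zfac (a i) 0 * Q a) + s * (\<Sum>a\<in>UNIV. (zfac (a i) 1 - zfac (a i) 0) * Q a)"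
      by (simp only: sum.distrib sum_distrib_left)
    finally show ?thesis .
  qed
  show "Uext u (upd x i t) = Uext u (upd x i 0) + t * (Uext u (upd x i 1) - Uext u (upd x i 0))"
    unfolding e by simp
qed

lemma multiaff_diff: assumes "multiaff f" "multiaff g" shows "multiaff (\<lambda>x. f x - g x)"
  unfolding multiaff_def
proof (intro allI)
  fix x i t
  have a: "f (upd x i t) = f (upd x i 0) + t * (f (upd x i 1) - f (upd x i 0))"
    using assms(1) unfolding multiaff_def by blast
  have b: "g (upd x i t) = g (upd x i 0) + t * (g (upd x i 1) - g (upd x i 0))"
    using assms(2) unfolding multiaff_def by blast
  show "f (upd x i t) - g (upd x i t) = f (upd x i 0) - g (upd x i 0) + t * (f (upd x i 1) - g (upd x i 1) - (f (upd x i 0) - g (upd x i 0)))"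
    unfolding a b by (simp add: algebra_simps)
qed

lemma multiaff_upd: "multiaff f \<Longrightarrow> multiaff (\<lambda>x. f (upd x i c))"
  unfolding multiaff_def
proof (intro allI)
  fix x j t assume m: "\<forall>x i t. f (upd x i t) = f (upd x i 0) + t * (f (upd x i 1) - f (upd x i 0))"
  show "f (upd (upd x j t) i c) = f (upd (upd x j 0) i c) + t * (f (upd (upd x j 1) i c) - f (upd (upd x j 0) i c))"
  proof (cases "i = j")
    case True then show ?thesis by simp
  next
    case False
    have "f (upd (upd x i c) j t) = f (upd (upd x i c) j 0) + t * (f (upd (upd x i c) j 1) - f (upd (upd x i c) j 0))"
      using m by blast
    then show ?thesis using False by (simp only: upd_comm[OF False])
  qed
qed

definition D :: "(('n::finite \<Rightarrow> bool) \<Rightarrow> real) \<Rightarrow> 'n \<Rightarrow> real^'n \<Rightarrow> real" where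
  "D u i x = Uext u (upd x i 1) - Uext u (upd x i 0)"

definition E :: "(('n::finite \<Rightarrow> bool) \<Rightarrow> real) \<Rightarrow> 'n \<Rightarrow> 'n \<Rightarrow> real^'n \<Rightarrow> real" where
  "E u i j x = D u j (upd x i 1) - D u j (upd x i 0)"

lemma multiaff_D: "multiaff (D u i)"
  unfolding D_def[abs_def] by (intro multiaff_diff multiaff_upd multiaff_Uext)

lemma D_upd_same[simp]: "D u i (upd x i t) = D u i x"
  by (simp add: D_def)

lemma Uext_aff: "Uext u (upd x i t) = Uext u (upd x i 0) + t * D u i x"
  using multiaff_Uext[of u] unfolding multiaff_def D_def by blast

lemma D_aff: "D u j (upd x i t) = D u j (upd x i 0) + t * E u i j x"
  using multiaff_D[of u j] unfolding multiaff_def E_def by blast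

lemma Upure_D: "Upure u i True x - Upure u i False x = D u i x"
  by (simp add: Upure_def D_def)

definition mix :: "'n set \<Rightarrow> real^'n \<Rightarrow> real^'n \<Rightarrow> real^'n" where
  "mix S x y = (\<chi> k. if k \<in> S then x$k else y$k)"

lemma telescope_set:
  fixes f :: "real^'n::finite \<Rightarrow> real"
  assumes m: "multiaff f" and fin: "finite S"
  shows "\<exists>W. (\<forall>i k. W i $ k = x$k \<or> W i $ k = y$k) \<and>
    f (mix S x y) - f y = (\<Sum>i\<in>S. (x$i - y$i) * (f (upd (W i) i 1) - f (upd (W i) i 0)))"
  using fin
proof (induction S rule: finite_induct)
  case empty
  have "mix {} x y = y" by (simp add: mix_def vec_eq_iff)
  then show ?case by (intro exI[of _ "\<lambda>i. y"]) simp
next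
  case (insert i S)
  then obtain W where W: "\<forall>i k. W i $ k = x$k \<or> W i $ k = y$k"
    and eq: "f (mix S x y) - f y = (\<Sum>i\<in>S. (x$i - y$i) * (f (upd (W i) i 1) - f (upd (W i) i 0)))"
    by blast
  define z where "z = mix S x y"
  have zi: "z $ i = y $ i" using insert by (simp add: z_def mix_def)
  have mi: "mix (insert i S) x y = upd z i (x$i)"
    by (simp add: z_def mix_def upd_def vec_eq_iff)
  have a1: "f (upd z i (x$i)) = f (upd z i 0) + x$i * (f (upd z i 1) - f (upd z i 0))"
    using m unfolding multiaff_def by blast
  have a2: "f (upd z i (y$i)) = f (upd z i 0) + y$i * (f (upd z i 1) - f (upd z i 0))"
    using m unfolding multiaff_def by blast
  have a3: "upd z i (y$i) = z" using zi by (metis upd_self)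
  define W' where "W' = W(i := z)"
  have "f (mix (insert i S) x y) - f y = (x$i - y$i) * (f (upd z i 1) - f (upd z i 0)) + (f (mix S x y) - f y)"
    unfolding mi using a1 a2 a3 z_def by (simp add: algebra_simps)
  also have "\<dots> = (\<Sum>j\<in>insert i S. (x$j - y$j) * (f (upd (W' j) j 1) - f (upd (W' j) j 0)))"
    unfolding eq using insert by (auto simp: W'_def intro!: sum.cong)
  finally have "f (mix (insert i S) x y) - f y = (\<Sum>j\<in>insert i S. (x$j - y$j) * (f (upd (W' j) j 1) - f (upd (W' j) j 0)))" .
  moreover have "\<forall>i k. W' i $ k = x$k \<or> W' i $ k = y$k"
    using W by (auto simp: W'_def z_def mix_def)
  ultimately show ?case by blast
qed

lemma telescope:
  fixes f :: "real^'n::finite \<Rightarrow> real"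
  assumes m: "multiaff f"
  shows "\<exists>W. (\<forall>i k. W i $ k = x$k \<or> W i $ k = y$k) \<and>
    f x - f y = (\<Sum>i\<in>UNIV. (x$i - y$i) * (f (upd (W i) i 1) - f (upd (W i) i 0)))"
proof -
  have "mix UNIV x y = x" by (simp add: mix_def vec_eq_iff)
  then show ?thesis using telescope_set[OF m, of UNIV x y] by simp
qed

definition d1 :: "real^'n::finite \<Rightarrow> real^'n \<Rightarrow> real" where
  "d1 x y = (\<Sum>i\<in>UNIV. \<bar>x$i - y$i\<bar>)"

definition Bnd :: "(('n::finite \<Rightarrow> bool) \<Rightarrow> real) \<Rightarrow> real" where
  "Bnd u = (\<Sum>a\<in>UNIV. \<bar>u a\<bar>)"

lemma zfac_bound: "0 \<le> t \<Longrightarrow> t \<le> 1 \<Longrightarrow> 0 \<le> zfac k t \<and> zfac k t \<le> 1"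
  by (cases k) (auto simp: zfac_def)

lemma Uext_bound: assumes "x \<in> \<Delta>" shows "\<bar>Uext u x\<bar> \<le> Bnd u"
proof -
  have p: "\<bar>\<Prod>i\<in>UNIV. zfac (a i) (x$i)\<bar> \<le> 1" for a :: "'a \<Rightarrow> bool"
  proof -
    have "\<bar>\<Prod>i\<in>UNIV. zfac (a i) (x$i)\<bar> = (\<Prod>i\<in>UNIV. \<bar>zfac (a i) (x$i)\<bar>)" by (rule abs_prod)
    also have "\<dots> \<le> (\<Prod>i\<in>(UNIV::'a set). 1)"
      using assms zfac_bound by (intro prod_mono) (auto simp: mixed_profiles_def)
    finally show ?thesis by simp
  qed
  have "\<bar>Uext u x\<bar> \<le> (\<Sum>a\<in>UNIV. \<bar>(\<Prod>i\<in>UNIV. zfac (a i) (x$i)) * u a\<bar>)"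
    unfolding Uext_def by (rule sum_abs)
  also have "\<dots> \<le> (\<Sum>a\<in>UNIV. \<bar>u a\<bar>)"
  proof (rule sum_mono)
    fix a :: "'a \<Rightarrow> bool"
    show "\<bar>(\<Prod>i\<in>UNIV. zfac (a i) (x$i)) * u a\<bar> \<le> \<bar>u a\<bar>"
      using p[of a] by (simp add: abs_mult mult_left_le_one_le)
  qed
  finally show ?thesis by (simp add: Bnd_def)
qed

lemma Bnd_nonneg: "0 \<le> Bnd u"
  by (simp add: Bnd_def sum_nonneg)

lemma upd_in_Delta: "x \<in> \<Delta> \<Longrightarrow> 0 \<le> t \<Longrightarrow> t \<le> 1 \<Longrightarrow> upd x i t \<in> \<Delta>"
  by (simp add: mixed_profiles_def upd_nth)

lemma D_bound: "x \<in> \<Delta> \<Longrightarrow> \<bar>D u i x\<bar> \<le> 2 * Bnd u"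
  unfolding D_def using Uext_bound[where x="upd x i 1" and u=u] Uext_bound[where x="upd x i 0" and u=u] upd_in_Delta[of x]
  by force

lemma E_bound: "x \<in> \<Delta> \<Longrightarrow> \<bar>E u i j x\<bar> \<le> 4 * Bnd u"
  unfolding E_def using D_bound[where x="upd x i 1" and u=u and i=j] D_bound[where x="upd x i 0" and u=u and i=j] upd_in_Delta[of x]
  by force

lemma between_Delta: "x \<in> \<Delta> \<Longrightarrow> y \<in> \<Delta> \<Longrightarrow> (\<forall>k. w $ k = x$k \<or> w $ k = y$k) \<Longrightarrow> w \<in> \<Delta>"
  unfolding mixed_profiles_def mem_Collect_eq by metis

lemma Uext_lip: assumes "x \<in> \<Delta>" "y \<in> \<Delta>" shows "\<bar>Uext u x - Uext u y\<bar> \<le> 2 * Bnd u * d1 x y"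
proof -
  obtain W where W: "\<forall>i k. W i $ k = x$k \<or> W i $ k = y$k"
    and eq: "Uext u x - Uext u y = (\<Sum>i\<in>UNIV. (x$i - y$i) * (Uext u (upd (W i) i 1) - Uext u (upd (W i) i 0)))"
    using telescope[OF multiaff_Uext, of x y] by blast
  have "\<bar>Uext u x - Uext u y\<bar> \<le> (\<Sum>i\<in>UNIV. \<bar>(x$i - y$i) * D u i (W i)\<bar>)"
    unfolding eq D_def[symmetric] by (rule sum_abs)
  also have "\<dots> \<le> (\<Sum>i\<in>UNIV. \<bar>x$i - y$i\<bar> * (2 * Bnd u))"
  proof (intro sum_mono)
    fix i
    have "W i \<in> \<Delta>" using between_Delta[OF assms] W by blast
    then have "\<bar>D u i (W i)\<bar> \<le> 2 * Bnd u" by (rule D_bound)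
    then show "\<bar>(x$i - y$i) * D u i (W i)\<bar> \<le> \<bar>x$i - y$i\<bar> * (2 * Bnd u)"
      unfolding abs_mult by (intro mult_left_mono) auto
  qed
  finally show ?thesis by (simp add: d1_def sum_distrib_left mult.commute)
qed

lemma D_lip: assumes "x \<in> \<Delta>" "y \<in> \<Delta>" shows "\<bar>D u j x - D u j y\<bar> \<le> 4 * Bnd u * d1 x y"
proof -
  obtain W where W: "\<forall>i k. W i $ k = x$k \<or> W i $ k = y$k"
    and eq: "D u j x - D u j y = (\<Sum>i\<in>UNIV. (x$i - y$i) * (D u j (upd (W i) i 1) - D u j (upd (W i) i 0)))"
    using telescope[OF multiaff_D, of x y] by blast
  have "\<bar>D u j x - D u j y\<bar> \<le> (\<Sum>i\<in>UNIV. \<bar>(x$i - y$i) * E u i j (W i)\<bar>)"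
    unfolding eq E_def[symmetric] by (rule sum_abs)
  also have "\<dots> \<le> (\<Sum>i\<in>UNIV. \<bar>x$i - y$i\<bar> * (4 * Bnd u))"
  proof (intro sum_mono)
    fix i
    have "W i \<in> \<Delta>" using between_Delta[OF assms] W by blast
    then have "\<bar>E u i j (W i)\<bar> \<le> 4 * Bnd u" by (rule E_bound)
    then show "\<bar>(x$i - y$i) * E u i j (W i)\<bar> \<le> \<bar>x$i - y$i\<bar> * (4 * Bnd u)"
      unfolding abs_mult by (intro mult_left_mono) auto
  qed
  finally show ?thesis by (simp add: d1_def sum_distrib_left mult.commute)
qed

lemma d1_upd: "d1 (upd x i t) (upd y i t) \<le> d1 x y"
  unfolding d1_def by (intro sum_mono) (simp add: upd_nth)

lemma d1_nonneg: "0 \<le> d1 x y"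
  by (simp add: d1_def sum_nonneg)

lemma d1_sym: "d1 x y = d1 y x"
  by (simp add: d1_def abs_minus_commute)

lemma d1_triangle: "d1 x z \<le> d1 x y + d1 y z"
  unfolding d1_def sum.distrib[symmetric] by (intro sum_mono) simp

lemma d1_zero: "d1 x y = 0 \<Longrightarrow> x = y"
  unfolding d1_def by (subst (asm) sum_nonneg_eq_0_iff) (auto simp: vec_eq_iff)

lemma E_lip: assumes "x \<in> \<Delta>" "y \<in> \<Delta>" shows "\<bar>E u i j x - E u i j y\<bar> \<le> 8 * Bnd u * d1 x y"
proof -
  have h: "\<bar>Uext u (upd (upd x i a) j b) - Uext u (upd (upd y i a) j b)\<bar> \<le> 2 * Bnd u * d1 x y"
    if "a \<in> {0,1}" "b \<in> {0,1}" for a b :: real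
  proof -
    have "\<bar>Uext u (upd (upd x i a) j b) - Uext u (upd (upd y i a) j b)\<bar> \<le> 2 * Bnd u * d1 (upd (upd x i a) j b) (upd (upd y i a) j b)"
      using that assms by (intro Uext_lip upd_in_Delta) auto
    also have "\<dots> \<le> 2 * Bnd u * d1 x y"
      using d1_upd[of "upd x i a" j b "upd y i a"] d1_upd[of x i a y] Bnd_nonneg[of u]
      by (intro mult_left_mono) auto
    finally show ?thesis .
  qed
  show ?thesis unfolding E_def D_def
    using h[of 1 1] h[of 1 0] h[of 0 1] h[of 0 0] by simp
qed

lemma d1_between: assumes "\<forall>k. w $ k = x$k \<or> w $ k = y$k" shows "d1 w s \<le> d1 x s + d1 y s"
  unfolding d1_def sum.distrib[symmetric]
proof (intro sum_mono)
  fix k show "\<bar>w$k - s$k\<bar> \<le> \<bar>x$k - s$k\<bar> + \<bar>y$k - s$k\<bar>" using assms[rule_format, of k] by auto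
qed

lemma sum_split_M: "(\<Sum>i\<in>UNIV. f i) = (\<Sum>i\<in>M. f i) + (\<Sum>i\<in>-M. f i)" for f :: "'n::finite \<Rightarrow> real"
  by (metis Compl_eq_Diff_UNIV add.commute finite sum.subset_diff top_greatest)

lemma Lin:
  assumes s: "s \<in> \<Delta>" and x: "x \<in> \<Delta>" and y: "y \<in> \<Delta>"
  shows "\<bar>D u j x - D u j y - (\<Sum>i\<in>M. (x$i - y$i) * E u i j s)\<bar>
     \<le> 8 * Bnd u * (d1 x s + d1 y s) * d1 x y + 4 * Bnd u * (\<Sum>i\<in>-M. \<bar>x$i - y$i\<bar>)"
proof -
  obtain W where W: "\<forall>i k. W i $ k = x$k \<or> W i $ k = y$k"
    and eq: "D u j x - D u j y = (\<Sum>i\<in>UNIV. (x$i - y$i) * (D u j (upd (W i) i 1) - D u j (upd (W i) i 0)))"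
    using telescope[OF multiaff_D, of x y] by blast
  have eq2: "D u j x - D u j y - (\<Sum>i\<in>M. (x$i - y$i) * E u i j s)
    = (\<Sum>i\<in>UNIV. (x$i - y$i) * (E u i j (W i) - E u i j s)) + (\<Sum>i\<in>-M. (x$i - y$i) * E u i j s)"
  proof -
    have "(\<Sum>i\<in>UNIV. (x$i - y$i) * (E u i j (W i) - E u i j s)) =
       (\<Sum>i\<in>UNIV. (x$i - y$i) * E u i j (W i)) - (\<Sum>i\<in>UNIV. (x$i - y$i) * E u i j s)"
      by (simp add: right_diff_distrib sum_subtractf)
    moreover have "(\<Sum>i\<in>UNIV. (x$i - y$i) * E u i j s) = (\<Sum>i\<in>M. (x$i - y$i) * E u i j s) + (\<Sum>i\<in>-M. (x$i - y$i) * E u i j s)"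
      by (rule sum_split_M)
    ultimately show ?thesis unfolding eq E_def by simp
  qed
  have b1: "\<bar>\<Sum>i\<in>UNIV. (x$i - y$i) * (E u i j (W i) - E u i j s)\<bar> \<le> 8 * Bnd u * (d1 x s + d1 y s) * d1 x y"
  proof -
    have "\<bar>\<Sum>i\<in>UNIV. (x$i - y$i) * (E u i j (W i) - E u i j s)\<bar> \<le> (\<Sum>i\<in>UNIV. \<bar>x$i - y$i\<bar> * (8 * Bnd u * (d1 x s + d1 y s)))"
    proof (rule order_trans[OF sum_abs], intro sum_mono)
      fix i
      have wi: "W i \<in> \<Delta>" using between_Delta[OF x y] W by blast
      have "\<bar>E u i j (W i) - E u i j s\<bar> \<le> 8 * Bnd u * d1 (W i) s" by (rule E_lip[OF wi s])
      also have "\<dots> \<le> 8 * Bnd u * (d1 x s + d1 y s)"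
        using d1_between[of "W i" x y s] W Bnd_nonneg[of u] by (intro mult_left_mono) auto
      finally show "\<bar>(x$i - y$i) * (E u i j (W i) - E u i j s)\<bar> \<le> \<bar>x$i - y$i\<bar> * (8 * Bnd u * (d1 x s + d1 y s))"
        unfolding abs_mult by (intro mult_left_mono) auto
    qed
    also have "\<dots> = (\<Sum>i\<in>UNIV. \<bar>x$i - y$i\<bar>) * (8 * Bnd u * (d1 x s + d1 y s))"
      by (rule sum_distrib_right[symmetric])
    also have "\<dots> = 8 * Bnd u * (d1 x s + d1 y s) * d1 x y"
      by (simp add: d1_def[of x y])
    finally show ?thesis .
  qed
  have b2: "\<bar>\<Sum>i\<in>-M. (x$i - y$i) * E u i j s\<bar> \<le> 4 * Bnd u * (\<Sum>i\<in>-M. \<bar>x$i - y$i\<bar>)"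
  proof -
    have "\<bar>\<Sum>i\<in>-M. (x$i - y$i) * E u i j s\<bar> \<le> (\<Sum>i\<in>-M. \<bar>x$i - y$i\<bar> * (4 * Bnd u))"
    proof (rule order_trans[OF sum_abs], intro sum_mono)
      fix i
      have "\<bar>E u i j s\<bar> \<le> 4 * Bnd u" by (rule E_bound[OF s])
      then show "\<bar>(x$i - y$i) * E u i j s\<bar> \<le> \<bar>x$i - y$i\<bar> * (4 * Bnd u)"
        unfolding abs_mult by (intro mult_left_mono) auto
    qed
    then show ?thesis by (simp add: sum_distrib_left mult.commute)
  qed
  show ?thesis unfolding eq2 using b1 b2 by linarith
qed

lemma NE_D:
  assumes "x \<in> NE u"
  shows "(D u i x > 0 \<longrightarrow> x$i = 1) \<and> (D u i x < 0 \<longrightarrow> x$i = 0)"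
proof -
  have x: "x \<in> \<Delta>" and ne: "\<forall>t\<in>{0..1}. Uext u x \<ge> Uext u (upd x i t)" using assms by (auto simp: NE_def)
  have xi: "0 \<le> x$i" "x$i \<le> 1" using x by (auto simp: mixed_profiles_def)
  have ux: "Uext u x = Uext u (upd x i 0) + x$i * D u i x"
    using Uext_aff[of u x i "x$i"] by simp
  have "Uext u (upd x i 1) \<le> Uext u x" "Uext u (upd x i 0) \<le> Uext u x" using ne by auto
  then have a: "D u i x * (1 - x$i) \<le> 0" and b: "0 \<le> x$i * D u i x"
    using Uext_aff[of u x i 1] ux by (auto simp: algebra_simps)
  show ?thesis
  proof (intro conjI impI)
    assume "D u i x > 0" then show "x$i = 1" using a xi
      by (smt (verit) mult_pos_pos)
  next
    assume "D u i x < 0" then show "x$i = 0" using b xi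
      by (smt (verit) mult_pos_neg)
  qed
qed

lemma NE_interior: "x \<in> NE u \<Longrightarrow> 0 < x$i \<Longrightarrow> x$i < 1 \<Longrightarrow> D u i x = 0"
  using NE_D[of x u i] by force

definition phi :: "(('n::finite \<Rightarrow> bool) \<Rightarrow> real) \<Rightarrow> real^'n \<Rightarrow> real" where
  "phi u x = (\<Sum>i\<in>UNIV. max 0 (D u i x) * (1 - x$i) + max 0 (- D u i x) * x$i)"

lemma phi_NE: assumes x: "x \<in> \<Delta>" shows "x \<in> NE u \<longleftrightarrow> phi u x = 0"
proof
  assume ne: "x \<in> NE u"
  have "max 0 (D u i x) * (1 - x$i) + max 0 (- D u i x) * x$i = 0" for i
    using NE_D[OF ne, of i] by (cases "D u i x > 0"; cases "D u i x < 0") auto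
  then show "phi u x = 0" by (simp add: phi_def)
next
  assume p: "phi u x = 0"
  have xi: "0 \<le> x$i" "x$i \<le> 1" for i using x by (auto simp: mixed_profiles_def)
  have nn: "0 \<le> max 0 (D u i x) * (1 - x$i) + max 0 (- D u i x) * x$i" for i
    using xi[of i] by (intro add_nonneg_nonneg mult_nonneg_nonneg) auto
  have z: "max 0 (D u i x) * (1 - x$i) + max 0 (- D u i x) * x$i = 0" for i
    using p nn unfolding phi_def by (subst (asm) sum_nonneg_eq_0_iff) auto
  show "x \<in> NE u" unfolding NE_def
  proof (intro CollectI conjI x ballI allI)
    fix i and t :: real assume t: "t \<in> {0..1}"
    have "Uext u (upd x i t) - Uext u x = (t - x$i) * D u i x"
      using Uext_aff[of u x i t] Uext_aff[of u x i "x$i"] by (simp add: algebra_simps)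
    moreover have "(t - x$i) * D u i x \<le> 0"
    proof (cases "D u i x > 0")
      case True
      then have "x$i = 1" using z[of i] xi[of i] nn[of i]
        by (smt (verit, best) max.absorb2 max.absorb_iff1 mult_eq_0_iff mult_nonneg_nonneg)
      then show ?thesis using t True by (simp add: mult_nonpos_nonneg)
    next
      case False
      show ?thesis
      proof (cases "D u i x < 0")
        case True
        then have "x$i = 0" using z[of i] xi[of i]
          by (smt (verit, best) max.absorb2 max.absorb_iff1 mult_eq_0_iff mult_nonneg_nonneg)
        then show ?thesis using t True by (simp add: mult_nonneg_nonpos mult_nonpos_nonpos)
      next
        case False2: False
        then show ?thesis using False by simp
      qed
    qed
    ultimately show "Uext u x \<ge> Uext u (upd x i t)" by simp
  qed
qed

lemma partial_Uext: "partial j (Uext u) y = D u j y"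
proof -
  have "((\<lambda>t. Uext u (upd y j 0) + t * D u j y) has_real_derivative D u j y) (at (y$j))"
    by (auto intro!: derivative_eq_intros)
  then have "deriv (\<lambda>t. Uext u (upd y j 0) + t * D u j y) (y$j) = D u j y" by (rule DERIV_imp_deriv)
  moreover have "(\<lambda>t. Uext u (upd y j t)) = (\<lambda>t. Uext u (upd y j 0) + t * D u j y)"
    using Uext_aff by blast
  ultimately show ?thesis by (simp add: partial_def)
qed

lemma hessian_E: "restr_hessian u xs s i j = E u i j s"
proof -
  have "((\<lambda>t. D u j (upd s i 0) + t * E u i j s) has_real_derivative E u i j s) (at (s$i))"
    by (auto intro!: derivative_eq_intros)
  then have "deriv (\<lambda>t. D u j (upd s i 0) + t * E u i j s) (s$i) = E u i j s" by (rule DERIV_imp_deriv)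
  moreover have "(\<lambda>t. partial j (Uext u) (upd s i t)) = (\<lambda>t. D u j (upd s i 0) + t * E u i j s)"
    unfolding partial_Uext using D_aff by blast
  ultimately show ?thesis by (simp add: restr_hessian_def partial_def)
qed

definition sig :: "real \<Rightarrow> real" where "sig z = 1 / (1 + exp (- z))"

lemma sig_pos: "0 < sig z" by (simp add: sig_def add_pos_pos)
lemma onep_exp_pos: "0 < 1 + exp w" for w :: real
  by (smt (verit) exp_gt_zero)

lemma sig_lt1: "sig z < 1"
  unfolding sig_def using exp_gt_zero[of "-z"] onep_exp_pos[of "-z"] by (simp add: divide_less_eq)

lemma one_minus_sig: "1 - sig z = sig (- z)"
proof -
  have p: "1 + exp (-z) > 0" "1 + exp z > 0" by (auto intro: add_pos_pos)
  have "exp (-z) * exp z = 1" by (simp add: exp_add[symmetric])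
  then show ?thesis using p unfolding sig_def by (simp add: field_simps)
qed

lemma one_minus_sig_le: "1 - sig z \<le> exp (- z)"
proof -
  have "1 - sig z = exp (-z) / (1 + exp (-z))"
    unfolding sig_def using onep_exp_pos[of "-z"] by (simp add: field_simps)
  also have "\<dots> \<le> exp (-z)" using onep_exp_pos[of "-z"] by (simp add: divide_le_eq)
  finally show ?thesis .
qed

lemma sig_le_exp: "sig z \<le> exp z"
  using one_minus_sig_le[of "-z"] one_minus_sig[of "-z"] by simp

lemma logitBR_nth: "logitBR u lam x $ i = sig (D u i x / lam)"
proof -
  let ?a = "Upure u i True x / lam" and ?b = "Upure u i False x / lam"
  have d: "D u i x / lam = ?a - ?b" unfolding Upure_D[of u i x, symmetric] by (rule diff_divide_distrib)
  have "exp ?a / (exp ?a + exp ?b) = 1 / (1 + exp (- (?a - ?b)))"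
    by (simp add: exp_diff field_simps)
  then show ?thesis unfolding logitBR_def sig_def d by simp
qed

definition lg :: "real \<Rightarrow> real" where "lg t = ln t - ln (1 - t)"

lemma sig_lg: assumes "0 < t" "t < 1" shows "sig (lg t) = t"
proof -
  have "exp (- lg t) = (1 - t) / t" using assms by (simp add: lg_def exp_diff)
  then have "1 + exp (- lg t) = 1 / t" using assms by (simp add: field_simps)
  then show ?thesis unfolding sig_def by simp
qed

lemma lg_sig: "lg (sig z) = z"
proof -
  have "1 - sig z = exp (-z) / (1 + exp (-z))"
    unfolding sig_def using onep_exp_pos[of "-z"] by (simp add: field_simps)
  moreover have "sig z = 1 / (1 + exp (-z))" by (simp add: sig_def)
  moreover have "1 + exp (-z) > 0" by (simp add: add_pos_pos)
  ultimately show ?thesis unfolding lg_def by (simp add: ln_div)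
qed

lemma exp_lip: fixes a b c :: real assumes "c \<le> a" "c \<le> b" shows "\<bar>exp (-a) - exp (-b)\<bar> \<le> exp (-c) * \<bar>a - b\<bar>"
proof -
  have gen: "exp (-a) - exp (-b) \<le> exp (-c) * (b - a)" if "a \<le> b" "c \<le> a" for a b
  proof -
    have "exp (-a) * exp (a - b) = exp (-a + (a - b))" by (rule exp_add[symmetric])
    also have "-a + (a - b) = -b" by simp
    finally have "exp (-a) * exp (a - b) = exp (-b)" .
    then have "exp (-a) - exp (-b) = exp (-a) * (1 - exp (a - b))" by (simp add: algebra_simps)
    also have "\<dots> \<le> exp (-a) * (b - a)"
    proof (intro mult_left_mono)
      show "1 - exp (a - b) \<le> b - a" using exp_ge_add_one_self[of "a - b"] by linarith
    qed auto
    also have "\<dots> \<le> exp (-c) * (b - a)" using that by (intro mult_right_mono) auto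
    finally show ?thesis .
  qed
  show ?thesis
  proof (cases "a \<le> b")
    case True
    then have "exp (-b) \<le> exp (-a)" by simp
    then show ?thesis using gen[OF True assms(1)] True by (simp add: abs_if)
  next
    case False
    then have "exp (-a) \<le> exp (-b)" by simp
    then show ?thesis using gen[of b a] False assms by (simp add: abs_if)
  qed
qed

lemma sig_lip_pos: assumes "c \<le> a" "c \<le> b" shows "\<bar>sig a - sig b\<bar> \<le> exp (-c) * \<bar>a - b\<bar>"
proof -
  have p: "1 + exp (-a) > 0" "1 + exp (-b) > 0" by (auto intro: add_pos_pos)
  have "sig a - sig b = (exp (-b) - exp (-a)) / ((1 + exp (-a)) * (1 + exp (-b)))"
    unfolding sig_def using p by (simp add: field_simps)
  then have "\<bar>sig a - sig b\<bar> = \<bar>exp (-b) - exp (-a)\<bar> / ((1 + exp (-a)) * (1 + exp (-b)))"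
    using p by (simp add: abs_div)
  also have "\<dots> \<le> \<bar>exp (-b) - exp (-a)\<bar>"
  proof -
    have "1 \<le> (1 + exp (-a)) * (1 + exp (-b))"
      by (smt (verit) exp_gt_zero mult_less_cancel_left2 mult_nonneg_nonneg)
    then show ?thesis by (simp add: divide_le_eq mult_le_cancel_left1)
  qed
  also have "\<dots> \<le> exp (-c) * \<bar>a - b\<bar>" using exp_lip[OF assms(2,1)] by (simp add: abs_minus_commute)
  finally show ?thesis .
qed

lemma sig_lip_neg: assumes "a \<le> -c" "b \<le> -c" shows "\<bar>sig a - sig b\<bar> \<le> exp (-c) * \<bar>a - b\<bar>"
proof -
  have "sig a = 1 - sig (-a)" "sig b = 1 - sig (-b)"
    using one_minus_sig[of "-a"] one_minus_sig[of "-b"] by simp_all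
  then have "\<bar>sig a - sig b\<bar> = \<bar>sig (-a) - sig (-b)\<bar>" by simp
  also have "\<dots> \<le> exp (-c) * \<bar>-a - -b\<bar>" using assms by (intro sig_lip_pos) auto
  finally show ?thesis by (simp add: abs_minus_commute)
qed

lemma exp_neg_small: fixes w :: real assumes "0 < w" shows "exp (- w) \<le> 2 / w^2"
proof -
  have "w^2 / 2 \<le> exp w" using exp_lower_Taylor_quadratic[of w] assms by simp
  then have "w^2 \<le> 2 * exp w" by simp
  then show ?thesis using assms by (simp add: exp_minus field_simps)
qed

lemma ln_lip: fixes a t t' :: real assumes "0 < a" "a \<le> t" "a \<le> t'" shows "\<bar>ln t - ln t'\<bar> \<le> \<bar>t - t'\<bar> / a"
proof -
  have g: "ln p - ln q \<le> \<bar>p - q\<bar> / a" if "a \<le> p" "a \<le> q" for p q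
  proof -
    have "ln p - ln q = ln (p / q)" using that assms by (simp add: ln_div)
    also have "\<dots> \<le> p / q - 1" using that assms by (intro ln_le_minus_one) auto
    also have "\<dots> = (p - q) / q" using that assms by (simp add: field_simps)
    also have "\<dots> \<le> \<bar>p - q\<bar> / q" using that assms by (intro divide_right_mono) auto
    also have "\<dots> \<le> \<bar>p - q\<bar> / a" using that assms by (intro divide_left_mono) auto
    finally show ?thesis .
  qed
  show ?thesis using g[of t t'] g[of t' t] assms by (simp add: abs_minus_commute abs_le_iff)
qed

lemma ln_abs_bound: fixes a t :: real assumes "0 < a" "a \<le> t" "t \<le> 1" shows "\<bar>ln t\<bar> \<le> 1 / a"
proof -
  have "ln (1/t) \<le> 1/t - 1" using assms by (intro ln_le_minus_one) auto
  moreover have "1/t \<le> 1/a" using assms by (intro divide_left_mono) auto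
  moreover have "ln t \<le> 0" using assms by simp
  moreover have "ln (1/t) = - ln t" using assms by (simp add: ln_div)
  ultimately show ?thesis by auto
qed

lemma lg_lip: fixes a t t' :: real assumes "0 < a" "a \<le> t" "t \<le> 1 - a" "a \<le> t'" "t' \<le> 1 - a"
  shows "\<bar>lg t - lg t'\<bar> \<le> 2 / a * \<bar>t - t'\<bar>"
proof -
  have "\<bar>ln t - ln t'\<bar> \<le> \<bar>t - t'\<bar> / a" using assms by (intro ln_lip) auto
  moreover have "\<bar>ln (1-t) - ln (1-t')\<bar> \<le> \<bar>(1-t) - (1-t')\<bar> / a" using assms by (intro ln_lip) auto
  ultimately show ?thesis unfolding lg_def by (simp add: abs_minus_commute)
qed

lemma lg_bound: fixes a t :: real assumes "0 < a" "a \<le> t" "t \<le> 1 - a" shows "\<bar>lg t\<bar> \<le> 2 / a"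
proof -
  have "\<bar>ln t\<bar> \<le> 1/a" "\<bar>ln (1 - t)\<bar> \<le> 1/a" using assms by (intro ln_abs_bound; simp)+
  then show ?thesis unfolding lg_def by simp
qed

lemma z_sig_bound: fixes z :: real shows "0 \<le> z \<Longrightarrow> z * sig (- z) \<le> 1"
proof -
  assume z: "0 \<le> z"
  have "z \<le> 1 + exp z" using exp_ge_add_one_self[of z] exp_gt_zero[of z] by linarith
  then show ?thesis unfolding sig_def by (simp add: divide_le_eq add_pos_pos)
qed

lemma finite_pos_lower:
  fixes f :: "'a \<Rightarrow> real"
  assumes "finite A" "\<forall>j\<in>A. 0 < f j"
  shows "\<exists>a>0. \<forall>j\<in>A. a \<le> f j"
  using assms
proof (induction A rule: finite_induct)
  case empty then show ?case by (intro exI[of _ 1]) auto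
next
  case (insert x A)
  then obtain a where "a > 0" "\<forall>j\<in>A. a \<le> f j" by auto
  then show ?case using insert by (intro exI[of _ "min a (f x)"]) auto
qed

definition KG :: "'a set \<Rightarrow> ('a \<Rightarrow> 'a \<Rightarrow> real) \<Rightarrow> real" where
  "KG M G = (\<Sum>i\<in>M. \<Sum>j\<in>M. \<bar>G i j\<bar>)"

lemma KG_nonneg: "0 \<le> KG M G"
  by (simp add: KG_def sum_nonneg)

lemma KG_row: "finite M \<Longrightarrow> j \<in> M \<Longrightarrow> (\<Sum>k\<in>M. \<bar>G j k\<bar>) \<le> KG M G"
  unfolding KG_def by (rule member_le_sum) (auto intro: sum_nonneg)

lemma inv_repr:
  fixes H G :: "'a \<Rightarrow> 'a \<Rightarrow> real" and v :: "'a \<Rightarrow> real"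
  assumes fin: "finite M" and inv: "\<forall>i\<in>M. \<forall>k\<in>M. (\<Sum>j\<in>M. H i j * G j k) = (if i = k then 1 else 0)"
    and k: "k \<in> M"
  shows "(\<Sum>j\<in>M. (\<Sum>i\<in>M. v i * H i j) * G j k) = v k"
proof -
  have "(\<Sum>j\<in>M. (\<Sum>i\<in>M. v i * H i j) * G j k) = (\<Sum>j\<in>M. \<Sum>i\<in>M. v i * (H i j * G j k))"
    by (rule sum.cong[OF refl], subst sum_distrib_right, rule sum.cong[OF refl], simp only: mult.assoc)
  also have "\<dots> = (\<Sum>i\<in>M. v i * (\<Sum>j\<in>M. H i j * G j k))"
    by (subst sum.swap) (simp add: sum_distrib_left)
  also have "\<dots> = (\<Sum>i\<in>M. v i * (if i = k then 1 else 0))"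
    using inv k by (intro sum.cong) auto
  also have "\<dots> = v k" using fin k by (simp add: if_distrib sum.delta cong: if_cong)
  finally show ?thesis .
qed

lemma inv_bound:
  fixes H G :: "'a \<Rightarrow> 'a \<Rightarrow> real" and v :: "'a \<Rightarrow> real"
  assumes fin: "finite M" and inv: "\<forall>i\<in>M. \<forall>k\<in>M. (\<Sum>j\<in>M. H i j * G j k) = (if i = k then 1 else 0)"
  shows "(\<Sum>k\<in>M. \<bar>v k\<bar>) \<le> KG M G * (\<Sum>j\<in>M. \<bar>\<Sum>i\<in>M. v i * H i j\<bar>)"
proof -
  define r where "r j = (\<Sum>i\<in>M. v i * H i j)" for j
  have "(\<Sum>k\<in>M. \<bar>v k\<bar>) = (\<Sum>k\<in>M. \<bar>\<Sum>j\<in>M. r j * G j k\<bar>)"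
    using inv_repr[OF fin inv] unfolding r_def by (intro sum.cong) auto
  also have "\<dots> \<le> (\<Sum>k\<in>M. \<Sum>j\<in>M. \<bar>r j\<bar> * \<bar>G j k\<bar>)"
    by (intro sum_mono order_trans[OF sum_abs]) (simp add: abs_mult)
  also have "\<dots> = (\<Sum>j\<in>M. \<bar>r j\<bar> * (\<Sum>k\<in>M. \<bar>G j k\<bar>))"
    by (subst sum.swap) (simp add: sum_distrib_left)
  also have "\<dots> \<le> (\<Sum>j\<in>M. \<bar>r j\<bar> * KG M G)"
    using KG_row[OF fin] by (intro sum_mono mult_left_mono) auto
  also have "\<dots> = KG M G * (\<Sum>j\<in>M. \<bar>r j\<bar>)" by (simp add: sum_distrib_left mult.commute)
  finally show ?thesis unfolding r_def .
qed

lemma inv_solve: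
  fixes H G :: "'a \<Rightarrow> 'a \<Rightarrow> real" and q :: "'a \<Rightarrow> real"
  assumes fin: "finite M" and inv: "\<forall>i\<in>M. \<forall>k\<in>M. (\<Sum>j\<in>M. G i j * H j k) = (if i = k then 1 else 0)"
    and j: "j \<in> M"
  shows "(\<Sum>i\<in>M. (\<Sum>l\<in>M. q l * G l i) * H i j) = q j"
proof -
  have "(\<Sum>i\<in>M. (\<Sum>l\<in>M. q l * G l i) * H i j) = (\<Sum>i\<in>M. \<Sum>l\<in>M. q l * (G l i * H i j))"
    by (rule sum.cong[OF refl], subst sum_distrib_right, rule sum.cong[OF refl], simp only: mult.assoc)
  also have "\<dots> = (\<Sum>l\<in>M. q l * (\<Sum>i\<in>M. G l i * H i j))"
    by (subst sum.swap) (simp add: sum_distrib_left)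
  also have "\<dots> = (\<Sum>l\<in>M. q l * (if l = j then 1 else 0))"
    using inv j by (intro sum.cong) auto
  also have "\<dots> = q j" using fin j by (simp add: if_distrib sum.delta cong: if_cong)
  finally show ?thesis .
qed

lemma core:
  fixes M :: "'n::finite set"
  assumes inv: "\<forall>i\<in>M. \<forall>k\<in>M. (\<Sum>j\<in>M. E u i j s * G j k) = (if i = k then 1 else 0)"
    and s: "s \<in> \<Delta>" and x: "x \<in> \<Delta>" and y: "y \<in> \<Delta>"
  shows "(\<Sum>i\<in>M. \<bar>x$i - y$i\<bar>) \<le> KG M G * (\<Sum>j\<in>M. \<bar>D u j x - D u j y\<bar>)
     + KG M G * card M * (8 * Bnd u * (d1 x s + d1 y s) * d1 x y + 4 * Bnd u * (\<Sum>i\<in>-M. \<bar>x$i - y$i\<bar>))"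
proof -
  define L where "L = 8 * Bnd u * (d1 x s + d1 y s) * d1 x y + 4 * Bnd u * (\<Sum>i\<in>-M. \<bar>x$i - y$i\<bar>)"
  have "(\<Sum>i\<in>M. \<bar>x$i - y$i\<bar>) \<le> KG M G * (\<Sum>j\<in>M. \<bar>\<Sum>i\<in>M. (x$i - y$i) * E u i j s\<bar>)"
    by (rule inv_bound[OF finite inv])
  also have "\<dots> \<le> KG M G * (\<Sum>j\<in>M. \<bar>D u j x - D u j y\<bar> + L)"
  proof (intro mult_left_mono KG_nonneg sum_mono)
    fix j
    have "\<bar>D u j x - D u j y - (\<Sum>i\<in>M. (x$i - y$i) * E u i j s)\<bar> \<le> L"
      unfolding L_def by (rule Lin[OF s x y])
    then show "\<bar>\<Sum>i\<in>M. (x$i - y$i) * E u i j s\<bar> \<le> \<bar>D u j x - D u j y\<bar> + L" by linarith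
  qed
  also have "\<dots> = KG M G * (\<Sum>j\<in>M. \<bar>D u j x - D u j y\<bar>) + KG M G * card M * L"
    by (simp add: sum.distrib algebra_simps)
  finally show ?thesis unfolding L_def .
qed

lemma Delta_cbox: "(\<Delta> :: (real^'n::finite) set) = cbox 0 1"
  by (auto simp: mixed_profiles_def mem_box_cart)

lemma compact_Delta: "compact (\<Delta> :: (real^'n::finite) set)"
  by (simp add: Delta_cbox)

lemma continuous_on_zfac[continuous_intros]: "continuous_on S f \<Longrightarrow> continuous_on S (\<lambda>x. zfac k (f x))"
  by (cases k) (auto simp: zfac_def intro!: continuous_intros)

lemma continuous_on_Uext[continuous_intros]:
  "continuous_on S f \<Longrightarrow> continuous_on S (\<lambda>x. Uext u (f x))"
  unfolding Uext_def by (intro continuous_intros)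

lemma continuous_on_upd[continuous_intros]:
  "continuous_on S f \<Longrightarrow> continuous_on S g \<Longrightarrow> continuous_on S (\<lambda>x. upd (f x) i (g x))"
  unfolding upd_def
proof (intro continuous_intros)
  fix j assume "continuous_on S f" "continuous_on S g"
  then show "continuous_on S (\<lambda>x. if j = i then g x else f x $ j)"
    by (cases "j = i") (auto intro!: continuous_intros)
qed

lemma continuous_on_D[continuous_intros]:
  "continuous_on S f \<Longrightarrow> continuous_on S (\<lambda>x. D u i (f x))"
  unfolding D_def by (intro continuous_intros)

lemma continuous_on_phi: "continuous_on S (phi u)"
  unfolding phi_def by (intro continuous_intros)

lemma continuous_on_d1: "continuous_on S (\<lambda>x. d1 x s)"
  unfolding d1_def by (intro continuous_intros)

lemma KG_bound:
  fixes G :: "'a \<Rightarrow> 'a \<Rightarrow> real" and r :: "'a \<Rightarrow> real"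
  assumes fin: "finite M"
  shows "(\<Sum>k\<in>M. \<bar>\<Sum>j\<in>M. r j * G j k\<bar>) \<le> KG M G * (\<Sum>j\<in>M. \<bar>r j\<bar>)"
proof -
  have "(\<Sum>k\<in>M. \<bar>\<Sum>j\<in>M. r j * G j k\<bar>) \<le> (\<Sum>k\<in>M. \<Sum>j\<in>M. \<bar>r j\<bar> * \<bar>G j k\<bar>)"
    by (intro sum_mono order_trans[OF sum_abs]) (simp add: abs_mult)
  also have "\<dots> = (\<Sum>j\<in>M. \<bar>r j\<bar> * (\<Sum>k\<in>M. \<bar>G j k\<bar>))"
    by (subst sum.swap) (simp add: sum_distrib_left)
  also have "\<dots> \<le> (\<Sum>j\<in>M. \<bar>r j\<bar> * KG M G)"
    using KG_row[OF fin] by (intro sum_mono mult_left_mono) auto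
  also have "\<dots> = KG M G * (\<Sum>j\<in>M. \<bar>r j\<bar>)" by (simp add: sum_distrib_left mult.commute)
  finally show ?thesis .
qed

definition good :: "(('n::finite \<Rightarrow> bool) \<Rightarrow> real) \<Rightarrow> real^'n \<Rightarrow> real \<Rightarrow> real \<Rightarrow> ('n \<Rightarrow> 'n \<Rightarrow> real) \<Rightarrow> bool" where
  "good u s a c G \<longleftrightarrow> s \<in> \<Delta> \<and> 0 < a \<and> 0 < c \<and>
     (\<forall>j\<in>mixing_players s. 2*a \<le> s$j \<and> s$j \<le> 1 - 2*a \<and> D u j s = 0) \<and>
     (\<forall>k. k \<notin> mixing_players s \<longrightarrow> (s$k = 1 \<and> c \<le> D u k s) \<or> (s$k = 0 \<and> D u k s \<le> -c)) \<and>
     (\<forall>i\<in>mixing_players s. \<forall>k\<in>mixing_players s. (\<Sum>j\<in>mixing_players s. E u i j s * G j k) = (if i = k then 1 else 0)) \<and>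
     (\<forall>i\<in>mixing_players s. \<forall>k\<in>mixing_players s. (\<Sum>j\<in>mixing_players s. G i j * E u j k s) = (if i = k then 1 else 0))"

lemma good_exists:
  assumes sNE: "s \<in> NE u" and reg: "regular_NE u s"
  shows "\<exists>a c G. good u s a c G"
proof -
  define M where "M = mixing_players s"
  have s: "s \<in> \<Delta>" using sNE by (simp add: NE_def)
  have s01: "0 \<le> s$i \<and> s$i \<le> 1" for i using s by (simp add: mixed_profiles_def)
  obtain G where G1: "\<forall>i\<in>M. \<forall>k\<in>M. (\<Sum>j\<in>M. E u i j s * G j k) = (if i = k then 1 else 0)"
    and G2: "\<forall>i\<in>M. \<forall>k\<in>M. (\<Sum>j\<in>M. G i j * E u j k s) = (if i = k then 1 else 0)"
    using reg unfolding regular_NE_def invertible_on_def hessian_E M_def by blast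
  have "\<exists>a>0. \<forall>j\<in>M. a \<le> min (s$j) (1 - s$j) / 2"
    by (rule finite_pos_lower) (auto simp: M_def mixing_players_def)
  then obtain a where a: "a > 0" "\<forall>j\<in>M. a \<le> min (s$j) (1 - s$j) / 2" by blast
  have qs: "quasi_strict u s" using reg by (simp add: regular_NE_def)
  have pure: "(s$k = 1 \<and> 0 < D u k s) \<or> (s$k = 0 \<and> D u k s < 0)" if "k \<notin> M" for k
  proof -
    have "s$k = 0 \<or> s$k = 1" using that s01[of k] by (auto simp: M_def mixing_players_def)
    then show ?thesis using qs Upure_D[of u k s] unfolding quasi_strict_def by force
  qed
  have "\<exists>c>0. \<forall>k\<in>-M. c \<le> \<bar>D u k s\<bar>"
    by (rule finite_pos_lower) (use pure in force)+
  then obtain c where c: "c > 0" "\<forall>k\<in>-M. c \<le> \<bar>D u k s\<bar>" by blast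
  have "good u s a c G"
    unfolding good_def M_def[symmetric]
  proof (intro conjI s a(1) c(1) G1 G2 ballI allI impI)
    fix j assume j: "j \<in> M"
    show "2*a \<le> s$j" "s$j \<le> 1 - 2*a" using a(2) j by auto
    have "0 < s$j" "s$j < 1" using j by (auto simp: M_def mixing_players_def)
    then show "D u j s = 0" using NE_interior[OF sNE] by blast
  next
    fix k assume k: "k \<notin> M"
    show "(s$k = 1 \<and> c \<le> D u k s) \<or> (s$k = 0 \<and> D u k s \<le> -c)"
      using pure[OF k] c(2) k by force
  qed
  then show ?thesis by blast
qed

definition Bn :: "(('n::finite \<Rightarrow> bool) \<Rightarrow> real) \<Rightarrow> real" where "Bn u = Bnd u + 1"

lemma Bn_pos: "0 < Bn u" using Bnd_nonneg[of u] by (simp add: Bn_def)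
lemma Bnd_le_Bn: "Bnd u \<le> Bn u" by (simp add: Bn_def)

definition AA :: "real^'n::finite \<Rightarrow> ('n \<Rightarrow> 'n \<Rightarrow> real) \<Rightarrow> real" where
  "AA s G = KG (mixing_players s) G * card (mixing_players s)"

lemma AA_nonneg: "0 \<le> AA s G" by (simp add: AA_def KG_nonneg)

definition r0 :: "(('n::finite \<Rightarrow> bool) \<Rightarrow> real) \<Rightarrow> real^'n \<Rightarrow> real \<Rightarrow> real \<Rightarrow> ('n \<Rightarrow> 'n \<Rightarrow> real) \<Rightarrow> real" where
  "r0 u s a c G = min a (min (c / (8 * Bn u)) (1 / (64 * (AA s G + 1) * Bn u)))"

lemma r0_props:
  assumes g: "good u s a c G"
  shows "0 < r0 u s a c G" "r0 u s a c G \<le> a" "4 * Bnd u * r0 u s a c G \<le> c / 2"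
    "64 * AA s G * Bnd u * r0 u s a c G \<le> 1"
proof -
  have a: "0 < a" and c: "0 < c" using g by (auto simp: good_def)
  have B: "0 < Bn u" by (rule Bn_pos)
  have A: "0 \<le> AA s G" by (rule AA_nonneg)
  let ?r = "r0 u s a c G"
  show "0 < ?r" using a c B A by (simp add: r0_def)
  show "?r \<le> a" by (simp add: r0_def)
  have "?r \<le> c / (8 * Bn u)" by (simp add: r0_def)
  then have "8 * Bn u * ?r \<le> c" using B by (simp add: field_simps)
  moreover have "Bnd u * ?r \<le> Bn u * ?r" using Bnd_le_Bn[of u] \<open>0 < ?r\<close> by (intro mult_right_mono) auto
  ultimately show "4 * Bnd u * ?r \<le> c / 2" by linarith
  have "?r \<le> 1 / (64 * (AA s G + 1) * Bn u)" by (simp add: r0_def)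
  moreover have pos: "0 < 64 * (AA s G + 1) * Bn u" using B A by simp
  ultimately have "?r * (64 * (AA s G + 1) * Bn u) \<le> 1" by (simp add: pos_le_divide_eq)
  then have "64 * (AA s G + 1) * Bn u * ?r \<le> 1" by (simp add: mult.commute)
  moreover have "AA s G * Bnd u * ?r \<le> (AA s G + 1) * Bn u * ?r"
    using Bnd_le_Bn[of u] \<open>0 < ?r\<close> A Bnd_nonneg[of u] by (intro mult_right_mono mult_mono) auto
  ultimately show "64 * AA s G * Bnd u * ?r \<le> 1" by linarith
qed

lemma coord_le_d1: "\<bar>x$i - s$i\<bar> \<le> d1 x s"
  unfolding d1_def by (rule member_le_sum) auto

lemma d1_split: "d1 x y = (\<Sum>i\<in>M. \<bar>x$i - y$i\<bar>) + (\<Sum>i\<in>-M. \<bar>x$i - y$i\<bar>)"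
  unfolding d1_def by (rule sum_split_M)

lemma near_facts:
  assumes g: "good u s a c G" and x: "x \<in> \<Delta>" and d: "d1 x s \<le> r0 u s a c G"
  shows "\<forall>j\<in>mixing_players s. a \<le> x$j \<and> x$j \<le> 1 - a"
    "\<forall>k. k \<notin> mixing_players s \<longrightarrow> (s$k = 1 \<and> c/2 \<le> D u k x) \<or> (s$k = 0 \<and> D u k x \<le> -c/2)"
proof -
  have s: "s \<in> \<Delta>" using g by (simp add: good_def)
  show "\<forall>j\<in>mixing_players s. a \<le> x$j \<and> x$j \<le> 1 - a"
  proof
    fix j assume j: "j \<in> mixing_players s"
    have "\<bar>x$j - s$j\<bar> \<le> a" using coord_le_d1[of x j s] d r0_props(2)[OF g] by linarith
    moreover have "2*a \<le> s$j \<and> s$j \<le> 1 - 2*a" using g j unfolding good_def by blast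
    moreover have "0 < a" using g unfolding good_def by blast
    ultimately show "a \<le> x$j \<and> x$j \<le> 1 - a" by (auto simp: abs_le_iff)
  qed
  show "\<forall>k. k \<notin> mixing_players s \<longrightarrow> (s$k = 1 \<and> c/2 \<le> D u k x) \<or> (s$k = 0 \<and> D u k x \<le> -c/2)"
  proof (intro allI impI)
    fix k assume k: "k \<notin> mixing_players s"
    have "\<bar>D u k x - D u k s\<bar> \<le> 4 * Bnd u * d1 x s" by (rule D_lip[OF x s])
    also have "\<dots> \<le> 4 * Bnd u * r0 u s a c G" using d Bnd_nonneg[of u] by (intro mult_left_mono) auto
    also have "\<dots> \<le> c / 2" by (rule r0_props(3)[OF g])
    finally have ab: "\<bar>D u k x - D u k s\<bar> \<le> c / 2" .
    have h1: "D u k x - D u k s \<le> c/2" "D u k s - D u k x \<le> c/2" using ab by linarith+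
    have "(s$k = 1 \<and> c \<le> D u k s) \<or> (s$k = 0 \<and> D u k s \<le> -c)"
      using g k unfolding good_def by blast
    then show "(s$k = 1 \<and> c/2 \<le> D u k x) \<or> (s$k = 0 \<and> D u k x \<le> -c/2)"
    proof (elim disjE conjE)
      assume "s$k = 1" "c \<le> D u k s"
      then show ?thesis using h1 by simp
    next
      assume "s$k = 0" "D u k s \<le> -c"
      then show ?thesis using h1 by simp
    qed
  qed
qed

lemma good_facts:
  assumes g: "good u s a c G"
  shows "s \<in> \<Delta>" "0 < a" "0 < c"
    "\<And>j. j \<in> mixing_players s \<Longrightarrow> 2*a \<le> s$j \<and> s$j \<le> 1 - 2*a \<and> D u j s = 0"
    "\<And>k. k \<notin> mixing_players s \<Longrightarrow> (s$k = 1 \<and> c \<le> D u k s) \<or> (s$k = 0 \<and> D u k s \<le> -c)"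
    "\<forall>i\<in>mixing_players s. \<forall>k\<in>mixing_players s. (\<Sum>j\<in>mixing_players s. E u i j s * G j k) = (if i = k then 1 else 0)"
    "\<forall>i\<in>mixing_players s. \<forall>k\<in>mixing_players s. (\<Sum>j\<in>mixing_players s. G i j * E u j k s) = (if i = k then 1 else 0)"
  using g unfolding good_def by blast+

lemma isolation:
  assumes g: "good u s a c G" and y: "y \<in> NE u" and d: "d1 y s \<le> r0 u s a c G"
  shows "y = s"
proof -
  define M where "M = mixing_players s"
  note gf = good_facts[OF g, folded M_def]
  have s: "s \<in> \<Delta>" by (rule gf(1))
  have yD: "y \<in> \<Delta>" using y by (simp add: NE_def)
  note nf = near_facts[OF g yD d, folded M_def]
  have Dy: "D u j y = 0" if "j \<in> M" for j
  proof -
    have "a \<le> y$j" "y$j \<le> 1 - a" using nf(1) that by auto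
    then have "0 < y$j" "y$j < 1" using gf(2) by linarith+
    then show ?thesis using NE_interior[OF y] by blast
  qed
  have Ds: "D u j s = 0" if "j \<in> M" for j using gf(4)[OF that] by blast
  have pure: "y$k = s$k" if "k \<notin> M" for k
  proof -
    have ne: "(D u k y > 0 \<longrightarrow> y$k = 1) \<and> (D u k y < 0 \<longrightarrow> y$k = 0)" by (rule NE_D[OF y])
    have "(s$k = 1 \<and> c/2 \<le> D u k y) \<or> (s$k = 0 \<and> D u k y \<le> -c/2)" using nf(2) that by blast
    then show ?thesis
    proof (elim disjE conjE)
      assume "s$k = 1" "c/2 \<le> D u k y" then show ?thesis using ne gf(3) by simp
    next
      assume "s$k = 0" "D u k y \<le> -c/2" then show ?thesis using ne gf(3) by simp
    qed
  qed
  have P0: "(\<Sum>i\<in>-M. \<bar>y$i - s$i\<bar>) = 0" using pure by simp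
  have M0: "(\<Sum>j\<in>M. \<bar>D u j y - D u j s\<bar>) = 0" using Dy Ds by simp
  have dss: "d1 s s = 0" by (simp add: d1_def)
  have "(\<Sum>i\<in>M. \<bar>y$i - s$i\<bar>) \<le> KG M G * (\<Sum>j\<in>M. \<bar>D u j y - D u j s\<bar>)
     + KG M G * card M * (8 * Bnd u * (d1 y s + d1 s s) * d1 y s + 4 * Bnd u * (\<Sum>i\<in>-M. \<bar>y$i - s$i\<bar>))"
    by (rule core[OF gf(6) s yD s])
  also have "\<dots> = AA s G * (8 * Bnd u * d1 y s * d1 y s)"
    unfolding P0 M0 dss by (simp add: AA_def M_def)
  finally have h: "d1 y s \<le> AA s G * (8 * Bnd u * d1 y s * d1 y s)"
    using d1_split[of y s M] P0 by simp
  have "AA s G * 8 * Bnd u * d1 y s \<le> AA s G * 8 * Bnd u * r0 u s a c G"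
    using d AA_nonneg[of s G] Bnd_nonneg[of u] by (intro mult_left_mono) auto
  then have "(AA s G * 8 * Bnd u * d1 y s) * d1 y s \<le> (AA s G * 8 * Bnd u * r0 u s a c G) * d1 y s"
    using d1_nonneg[of y s] by (rule mult_right_mono)
  also have "\<dots> \<le> (1/8) * d1 y s"
    using r0_props(4)[OF g] d1_nonneg[of y s] by (intro mult_right_mono) auto
  finally have "d1 y s \<le> (1/8) * d1 y s" using h by (simp add: algebra_simps)
  then have "d1 y s \<le> 0" using d1_nonneg[of y s] by linarith
  then show ?thesis using d1_nonneg[of y s] d1_zero by force
qed

lemma ND_D: assumes "x \<in> ND u lam" shows "x \<in> \<Delta>" "x$i = sig (D u i x / lam)"
proof -
  show "x \<in> \<Delta>" using assms by (simp add: ND_def)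
  have "x = logitBR u lam x" using assms by (simp add: ND_def)
  then have "x$i = logitBR u lam x $ i" by simp
  then show "x$i = sig (D u i x / lam)" by (simp add: logitBR_nth)
qed

lemma ND_mix: assumes "0 < lam" "x \<in> ND u lam" shows "D u j x = lam * lg (x$j)"
proof -
  have "lg (x$j) = D u j x / lam" using ND_D(2)[OF assms(2), of j] lg_sig by simp
  then show ?thesis using assms(1) by simp
qed

lemma sum_le_card_bound:
  fixes f :: "'a \<Rightarrow> real"
  assumes "\<And>k. k \<in> S \<Longrightarrow> f k \<le> b"
  shows "(\<Sum>k\<in>S. f k) \<le> real (card S) * b"
  using sum_bounded_above[of S f b] assms by simp

lemma arith_theta:
  fixes A B Bn' c lam p :: real
  assumes "0 \<le> A" "0 \<le> B" "B \<le> Bn'" "0 < c" "0 \<le> p" "0 < lam"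
    and lam: "lam < c^2 / (128 * ((4 * A * Bn' + 1) * (p + 1) * Bn'))"
  shows "(4 * A * B + 1) * (p * (32 * B * lam / c^2)) \<le> 1/4"
proof -
  define Q where "Q = (4 * A * Bn' + 1) * (p + 1) * Bn'"
  have B0: "0 \<le> Bn'" using assms by linarith
  have Qp: "0 \<le> Q" unfolding Q_def using assms B0 by (intro mult_nonneg_nonneg add_nonneg_nonneg) auto
  have h1: "(4 * A * B + 1) * p * B \<le> Q"
    unfolding Q_def using assms B0
    by (intro mult_mono add_mono order_refl mult_nonneg_nonneg add_nonneg_nonneg) auto
  have "0 < 128 * Q + 1" using Qp by linarith
  have lam2: "lam * (128 * Q) \<le> c^2"
  proof (cases "Q = 0")
    case True then show ?thesis using assms by simp
  next
    case False
    then have "0 < 128 * Q" using Qp by simp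
    then show ?thesis using lam unfolding Q_def[symmetric] by (simp add: pos_less_divide_eq less_imp_le)
  qed
  have "(4 * A * B + 1) * (p * (32 * B * lam / c^2)) = 32 * ((4 * A * B + 1) * p * B) * lam / c^2"
    by (simp add: algebra_simps)
  also have "\<dots> \<le> 32 * Q * lam / c^2"
    using h1 assms by (intro divide_right_mono mult_right_mono) auto
  also have "\<dots> \<le> 1/4" using lam2 assms by (simp add: field_simps)
  finally show ?thesis .
qed

lemma uniqueness:
  assumes g: "good u s a c G"
  shows "\<exists>l1>0. \<forall>lam x y. 0 < lam \<longrightarrow> lam < l1 \<longrightarrow> x \<in> ND u lam \<longrightarrow> y \<in> ND u lam \<longrightarrow>
           d1 x s \<le> r0 u s a c G \<longrightarrow> d1 y s \<le> r0 u s a c G \<longrightarrow> x = y"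
proof -
  define M where "M = mixing_players s"
  note gf = good_facts[OF g, folded M_def]
  define K where "K = KG M G"
  define A where "A = AA s G"
  define B where "B = Bnd u"
  define p where "p = real (card (-M))"
  define R where "R = r0 u s a c G"
  have K0: "0 \<le> K" by (simp add: K_def KG_nonneg)
  have A0: "0 \<le> A" by (simp add: A_def AA_nonneg)
  have B0: "0 \<le> B" by (simp add: B_def Bnd_nonneg)
  have p0: "0 \<le> p" by (simp add: p_def)
  have AKm: "A = K * card M" by (simp add: A_def K_def AA_def M_def)
  have a0: "0 < a" and c0: "0 < c" using gf by auto
  define l1 where "l1 = min (a / (8 * (K + 1))) (c^2 / (128 * ((4 * A * Bn u + 1) * (p + 1) * Bn u)))"
  have "0 < a / (8 * (K + 1))" using a0 K0 by simp
  moreover have "0 < c^2 / (128 * ((4 * A * Bn u + 1) * (p + 1) * Bn u))"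
  proof -
    have "0 \<le> 4 * A * Bn u" using A0 Bn_pos[of u] by simp
    then have "0 < (4 * A * Bn u + 1) * (p + 1) * Bn u" using p0 Bn_pos[of u] by simp
    then show ?thesis using c0 by simp
  qed
  ultimately have l1p: "0 < l1" unfolding l1_def by simp
  have main: "x = y" if lam: "0 < lam" "lam < l1" and x: "x \<in> ND u lam" and y: "y \<in> ND u lam"
    and dx: "d1 x s \<le> R" and dy: "d1 y s \<le> R" for lam x y
  proof -
    have xD: "x \<in> \<Delta>" and yD: "y \<in> \<Delta>" using ND_D(1) x y by auto
    note nfx = near_facts[OF g xD dx[unfolded R_def], folded M_def]
    note nfy = near_facts[OF g yD dy[unfolded R_def], folded M_def]
    define dM where "dM = (\<Sum>i\<in>M. \<bar>x$i - y$i\<bar>)"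
    define dP where "dP = (\<Sum>i\<in>-M. \<bar>x$i - y$i\<bar>)"
    define d where "d = d1 x y"
    have dsplit: "d = dM + dP" unfolding d_def dM_def dP_def by (rule d1_split)
    have dM0: "0 \<le> dM" and dP0: "0 \<le> dP" by (simp_all add: dM_def dP_def sum_nonneg)
    have st1: "(\<Sum>j\<in>M. \<bar>D u j x - D u j y\<bar>) \<le> (2 * lam / a) * dM"
    proof -
      have "(\<Sum>j\<in>M. \<bar>D u j x - D u j y\<bar>) \<le> (\<Sum>j\<in>M. (2 * lam / a) * \<bar>x$j - y$j\<bar>)"
      proof (rule sum_mono)
        fix j assume j: "j \<in> M"
        have "\<bar>D u j x - D u j y\<bar> = lam * \<bar>lg (x$j) - lg (y$j)\<bar>"
          using ND_mix[OF lam(1) x, of j] ND_mix[OF lam(1) y, of j] lam(1)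
          by (simp add: right_diff_distrib[symmetric] abs_mult)
        also have "\<dots> \<le> lam * (2 / a * \<bar>x$j - y$j\<bar>)"
          using nfx(1) nfy(1) j a0 lam(1) by (intro mult_left_mono lg_lip) auto
        also have "lam * (2 / a * \<bar>x$j - y$j\<bar>) = (2 * lam / a) * \<bar>x$j - y$j\<bar>" by simp
        finally show "\<bar>D u j x - D u j y\<bar> \<le> (2 * lam / a) * \<bar>x$j - y$j\<bar>" .
      qed
      then show ?thesis by (simp add: dM_def sum_distrib_left)
    qed
    define th where "th = 32 * B * lam / c^2"
    have th0: "0 \<le> th" unfolding th_def using B0 lam by simp
    have st2: "\<bar>x$k - y$k\<bar> \<le> th * d" if k: "k \<notin> M" for k
    proof -
      define w where "w = c / (2 * lam)"
      have w0: "0 < w" unfolding w_def using c0 lam by simp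
      have lipsig: "\<bar>x$k - y$k\<bar> \<le> exp (- w) * \<bar>D u k x / lam - D u k y / lam\<bar>"
      proof -
        have xk: "x$k = sig (D u k x / lam)" and yk: "y$k = sig (D u k y / lam)"
          using ND_D(2) x y by auto
        have "(s$k = 1 \<and> c/2 \<le> D u k x) \<or> (s$k = 0 \<and> D u k x \<le> -c/2)" using nfx(2) k by blast
        moreover have "(s$k = 1 \<and> c/2 \<le> D u k y) \<or> (s$k = 0 \<and> D u k y \<le> -c/2)" using nfy(2) k by blast
        moreover have "w \<le> D u k x / lam" if "c/2 \<le> D u k x" for x
          using that lam(1) unfolding w_def by (simp add: field_simps)
        moreover have "D u k x / lam \<le> - w" if "D u k x \<le> -c/2" for x
          using that lam(1) unfolding w_def by (simp add: field_simps)
        ultimately have "(w \<le> D u k x / lam \<and> w \<le> D u k y / lam) \<or> (D u k x / lam \<le> -w \<and> D u k y / lam \<le> -w)"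
          by force
        then show ?thesis unfolding xk yk
          by (elim disjE conjE) (auto intro: sig_lip_pos sig_lip_neg)
      qed
      have e: "exp (- w) \<le> 8 * lam^2 / c^2"
        using exp_neg_small[OF w0] unfolding w_def using lam(1) c0 by (simp add: field_simps power2_eq_square)
      have dd: "\<bar>D u k x / lam - D u k y / lam\<bar> \<le> 4 * B * d / lam"
      proof -
        have "\<bar>D u k x / lam - D u k y / lam\<bar> = \<bar>D u k x - D u k y\<bar> / lam"
          using lam(1) by (simp add: diff_divide_distrib[symmetric])
        also have "\<dots> \<le> 4 * B * d / lam"
          using D_lip[OF xD yD, of u k] lam(1) unfolding B_def d_def by (intro divide_right_mono) auto
        finally show ?thesis .
      qed
      have "\<bar>x$k - y$k\<bar> \<le> (8 * lam^2 / c^2) * (4 * B * d / lam)"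
        using lipsig e dd by (smt (verit, best) abs_ge_zero exp_gt_zero mult_mono)
      also have "\<dots> = th * d" unfolding th_def using lam(1) by (simp add: field_simps power2_eq_square)
      finally show ?thesis .
    qed
    have st3: "dP \<le> p * (th * d)"
      unfolding dP_def p_def by (rule sum_le_card_bound) (use st2 in auto)
    have cr: "dM \<le> K * (\<Sum>j\<in>M. \<bar>D u j x - D u j y\<bar>)
     + A * (8 * B * (d1 x s + d1 y s) * d + 4 * B * dP)"
      using core[OF gf(6) gf(1) xD yD] unfolding dM_def K_def AKm B_def dP_def d_def by (simp add: mult.assoc)
    have c1: "K * (\<Sum>j\<in>M. \<bar>D u j x - D u j y\<bar>) \<le> (1/4) * dM"
    proof -
      have "K * (\<Sum>j\<in>M. \<bar>D u j x - D u j y\<bar>) \<le> K * ((2 * lam / a) * dM)"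
        using st1 K0 by (rule mult_left_mono)
      also have "\<dots> = (K * (2 * lam / a)) * dM" by simp
      also have "\<dots> \<le> (1/4) * dM"
      proof (rule mult_right_mono[OF _ dM0])
        have "lam < a / (8 * (K + 1))" using lam(2) unfolding l1_def by simp
        then have "lam * (8 * (K + 1)) < a" using K0 by (simp add: pos_less_divide_eq)
        moreover have "K * (2 * lam) \<le> (K + 1) * (2 * lam)" using lam(1) by (intro mult_right_mono) auto
        moreover have "(K + 1) * (2 * lam) = lam * (8 * (K + 1)) / 4" by (simp add: algebra_simps)
        ultimately have "K * (2 * lam) \<le> a / 4" by linarith
        then show "K * (2 * lam / a) \<le> 1/4" using a0 by (simp add: field_simps)
      qed
      finally show ?thesis .
    qed
    have c2: "A * (8 * B * (d1 x s + d1 y s) * d) \<le> (1/4) * d"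
    proof -
      have "A * (8 * B * (d1 x s + d1 y s) * d) = (8 * A * B * (d1 x s + d1 y s)) * d" by (simp add: algebra_simps)
      also have "\<dots> \<le> (8 * A * B * (2 * R)) * d"
        using dx dy A0 B0 d1_nonneg[of x y] unfolding d_def
        by (intro mult_right_mono mult_left_mono) auto
      also have "\<dots> \<le> (1/4) * d"
        using r0_props(4)[OF g] d1_nonneg[of x y] unfolding d_def R_def A_def B_def
        by (intro mult_right_mono) auto
      finally show ?thesis .
    qed
    have c3: "(4 * A * B + 1) * dP \<le> (1/4) * d"
    proof -
      have "(4 * A * B + 1) * dP \<le> (4 * A * B + 1) * (p * (th * d))"
        using st3 A0 B0 by (intro mult_left_mono) auto
      also have "\<dots> = ((4 * A * B + 1) * (p * th)) * d" by (simp add: algebra_simps)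
      also have "\<dots> \<le> (1/4) * d"
      proof (rule mult_right_mono)
        show "0 \<le> d" unfolding d_def by (rule d1_nonneg)
        have "lam < c^2 / (128 * ((4 * A * Bn u + 1) * (p + 1) * Bn u))" using lam(2) unfolding l1_def by simp
        then show "(4 * A * B + 1) * (p * th) \<le> 1/4"
          unfolding th_def using arith_theta[OF A0 B0 _ c0 p0 lam(1)] Bnd_le_Bn[of u] unfolding B_def
          by (simp add: mult.assoc)
      qed
      finally show ?thesis .
    qed
    have "d \<le> (3/4) * d"
    proof -
      have e1: "A * (8 * B * (d1 x s + d1 y s) * d + 4 * B * dP) = A * (8 * B * (d1 x s + d1 y s) * d) + 4 * A * B * dP"
        by (simp add: algebra_simps)
      have e2: "(4 * A * B + 1) * dP = 4 * A * B * dP + dP" by (simp add: algebra_simps)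
      show ?thesis using cr c1 c2 c3 dsplit dM0 dP0 unfolding e1 e2 by linarith
    qed
    then have "d \<le> 0" by linarith
    then show "x = y" using d1_nonneg[of x y] d1_zero unfolding d_def by force
  qed
  show ?thesis using l1p main unfolding R_def by blast
qed

definition Vset :: "real^'n::finite \<Rightarrow> 'n set \<Rightarrow> real \<Rightarrow> real \<Rightarrow> (real^'n) set" where
  "Vset s M rho eta = {x \<in> \<Delta>. (\<Sum>i\<in>M. \<bar>x$i - s$i\<bar>) \<le> rho \<and> (\<forall>k\<in>-M. \<bar>x$k - s$k\<bar> \<le> eta)}"

lemma compact_Vset: "compact (Vset s M rho eta)"
proof -
  have eq: "Vset s M rho eta = \<Delta> \<inter> ({x. (\<Sum>i\<in>M. \<bar>x$i - s$i\<bar>) \<le> rho} \<inter> (\<Inter>k\<in>-M. {x. \<bar>x$k - s$k\<bar> \<le> eta}))"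
    by (auto simp: Vset_def)
  have "closed ({x. (\<Sum>i\<in>M. \<bar>x$i - s$i\<bar>) \<le> rho} \<inter> (\<Inter>k\<in>-M. {x. \<bar>x$k - s$k\<bar> \<le> eta}))"
    by (intro closed_Int closed_INT ballI closed_Collect_le continuous_intros)
  then show ?thesis unfolding eq by (intro compact_Int_closed compact_Delta)
qed

lemma convex_Delta: "convex (\<Delta> :: (real^'n::finite) set)"
  by (simp add: Delta_cbox)

lemma convex_Vset: "convex (Vset s M rho eta)"
  unfolding convex_def
proof (intro ballI allI impI)
  fix x y :: "real^'a" and v w :: real
  assume x: "x \<in> Vset s M rho eta" and y: "y \<in> Vset s M rho eta" and vw: "0 \<le> v" "0 \<le> w" "v + w = 1"
  have xD: "x \<in> \<Delta>" and yD: "y \<in> \<Delta>" using x y by (auto simp: Vset_def)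
  have zD: "v *\<^sub>R x + w *\<^sub>R y \<in> \<Delta>" using convex_Delta xD yD vw unfolding convex_def by blast
  have coord: "\<bar>(v *\<^sub>R x + w *\<^sub>R y)$i - s$i\<bar> \<le> v * \<bar>x$i - s$i\<bar> + w * \<bar>y$i - s$i\<bar>" for i
  proof -
    have si: "s$i = v * s$i + w * s$i" using vw by (metis distrib_right mult_1)
    have "(v *\<^sub>R x + w *\<^sub>R y)$i - s$i = v * (x$i - s$i) + w * (y$i - s$i)"
      by (subst si) (simp add: algebra_simps)
    also have "\<bar>\<dots>\<bar> \<le> \<bar>v * (x$i - s$i)\<bar> + \<bar>w * (y$i - s$i)\<bar>" by (rule abs_triangle_ineq)
    also have "\<dots> = v * \<bar>x$i - s$i\<bar> + w * \<bar>y$i - s$i\<bar>" using vw by (simp add: abs_mult)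
    finally show ?thesis .
  qed
  have s1: "(\<Sum>i\<in>M. \<bar>(v *\<^sub>R x + w *\<^sub>R y)$i - s$i\<bar>) \<le> rho"
  proof -
    have "(\<Sum>i\<in>M. \<bar>(v *\<^sub>R x + w *\<^sub>R y)$i - s$i\<bar>) \<le> (\<Sum>i\<in>M. v * \<bar>x$i - s$i\<bar> + w * \<bar>y$i - s$i\<bar>)"
      by (intro sum_mono coord)
    also have "\<dots> = v * (\<Sum>i\<in>M. \<bar>x$i - s$i\<bar>) + w * (\<Sum>i\<in>M. \<bar>y$i - s$i\<bar>)"
      by (simp add: sum.distrib sum_distrib_left)
    also have "\<dots> \<le> v * rho + w * rho"
      using x y vw by (intro add_mono mult_left_mono) (auto simp: Vset_def)
    also have "\<dots> = rho" using vw by (simp add: distrib_right[symmetric])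
    finally show ?thesis .
  qed
  have s2: "\<bar>(v *\<^sub>R x + w *\<^sub>R y)$k - s$k\<bar> \<le> eta" if k: "k \<in> -M" for k
  proof -
    have "\<bar>x$k - s$k\<bar> \<le> eta" "\<bar>y$k - s$k\<bar> \<le> eta" using x y k by (auto simp: Vset_def)
    then have "v * \<bar>x$k - s$k\<bar> + w * \<bar>y$k - s$k\<bar> \<le> v * eta + w * eta"
      using vw by (intro add_mono mult_left_mono) auto
    also have "\<dots> = eta" using vw by (simp add: distrib_right[symmetric])
    finally show ?thesis using coord[of k] by linarith
  qed
  show "v *\<^sub>R x + w *\<^sub>R y \<in> Vset s M rho eta" using zD s1 s2 by (simp add: Vset_def)
qed

lemma continuous_on_sig[continuous_intros]: "continuous_on S f \<Longrightarrow> continuous_on S (\<lambda>x. sig (f x))"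
proof -
  have ne: "\<forall>x\<in>S. 1 + exp (- f x) \<noteq> 0" using onep_exp_pos by (metis less_irrefl)
  assume "continuous_on S f"
  then show ?thesis unfolding sig_def using ne by (intro continuous_intros) auto
qed

lemma pure_bound:
  assumes g: "good u s a c G" and x: "x \<in> \<Delta>" and d: "d1 x s \<le> r0 u s a c G"
    and k: "k \<notin> mixing_players s" and lam: "0 < lam"
  shows "\<bar>sig (D u k x / lam) - s$k\<bar> \<le> 8 * lam^2 / c^2"
proof -
  have c0: "0 < c" using good_facts(3)[OF g] .
  define w where "w = c / (2 * lam)"
  have w0: "0 < w" unfolding w_def using c0 lam by simp
  have e: "exp (- w) \<le> 8 * lam^2 / c^2"
    using exp_neg_small[OF w0] unfolding w_def using lam c0 by (simp add: power2_eq_square)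
  have "(s$k = 1 \<and> c/2 \<le> D u k x) \<or> (s$k = 0 \<and> D u k x \<le> -c/2)"
    using near_facts(2)[OF g x d] k by blast
  then have "\<bar>sig (D u k x / lam) - s$k\<bar> \<le> exp (- w)"
  proof (elim disjE conjE)
    assume s1: "s$k = 1" and D: "c/2 \<le> D u k x"
    have "w \<le> D u k x / lam" using D lam unfolding w_def by (simp add: field_simps)
    then have e1: "exp (- (D u k x / lam)) \<le> exp (- w)" by simp
    have e2: "1 - sig (D u k x / lam) \<le> exp (- (D u k x / lam))" by (rule one_minus_sig_le)
    have "\<bar>sig (D u k x / lam) - s$k\<bar> = 1 - sig (D u k x / lam)" using s1 sig_lt1[of "D u k x / lam"] by simp
    then show ?thesis using e1 e2 by linarith
  next
    assume s0: "s$k = 0" and D: "D u k x \<le> -c/2"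
    have "D u k x / lam \<le> - w" using D lam unfolding w_def by (simp add: field_simps)
    then have e1: "exp (D u k x / lam) \<le> exp (- w)" by simp
    have e2: "sig (D u k x / lam) \<le> exp (D u k x / lam)" by (rule sig_le_exp)
    have "\<bar>sig (D u k x / lam) - s$k\<bar> = sig (D u k x / lam)" using s0 sig_pos[of "D u k x / lam"] by simp
    then show ?thesis using e1 e2 by linarith
  qed
  then show ?thesis using e by linarith
qed

lemma existence:
  assumes g: "good u s a c G" and r: "0 < r" "r \<le> r0 u s a c G"
  shows "\<exists>l1>0. \<forall>lam. 0 < lam \<longrightarrow> lam < l1 \<longrightarrow> (\<exists>x\<in>ND u lam. d1 x s \<le> r)"
proof -
  define M where "M = mixing_players s"
  note gf = good_facts[OF g, folded M_def]
  define K where "K = KG M G"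
  define A where "A = AA s G"
  define B where "B = Bnd u"
  define p where "p = real (card (-M))"
  define R where "R = r0 u s a c G"
  have K0: "0 \<le> K" by (simp add: K_def KG_nonneg)
  have A0: "0 \<le> A" by (simp add: A_def AA_nonneg)
  have B0: "0 \<le> B" by (simp add: B_def Bnd_nonneg)
  have p0: "0 \<le> p" by (simp add: p_def)
  have AKm: "A = K * card M" by (simp add: A_def K_def AA_def M_def)
  have a0: "0 < a" and c0: "0 < c" using gf by auto
  have Bn1: "1 \<le> Bn u" using B0 by (simp add: Bn_def B_def)
  define Q where "Q = 64 * (A + 1) * Bn u * (p + 1)"
  have Q0: "0 < Q" unfolding Q_def using A0 Bn1 p0 by simp
  define eta where "eta = r / Q"
  have eta0: "0 < eta" unfolding eta_def using r Q0 by simp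
  have etaQ: "eta * Q = r" unfolding eta_def using Q0 by simp
  define rho where "rho = r / 2"
  define l1 where "l1 = min 1 (min (eta * c^2 / 8) (a * r / (8 * (A + 1))))"
  have l1p: "0 < l1" unfolding l1_def using eta0 c0 a0 r A0 by simp
  have RA: "R \<le> a" "64 * A * B * R \<le> 1" using r0_props[OF g] unfolding R_def A_def B_def by auto
  have peta: "p * eta \<le> r / 64"
  proof -
    have "p \<le> (A + 1) * Bn u * (p + 1)"
    proof -
      have "p \<le> 1 * 1 * (p + 1)" by simp
      also have "\<dots> \<le> (A + 1) * Bn u * (p + 1)" using A0 Bn1 p0 by (intro mult_mono) auto
      finally show ?thesis .
    qed
    then have "p * eta \<le> (A + 1) * Bn u * (p + 1) * eta" using eta0 by (intro mult_right_mono) auto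
    also have "\<dots> = r / 64" using etaQ unfolding Q_def by (simp add: algebra_simps)
    finally show ?thesis .
  qed
  have ABpeta: "A * (4 * B * (p * eta)) \<le> r / 16"
  proof -
    have "A * B * p \<le> (A + 1) * Bn u * (p + 1)"
      using A0 B0 p0 Bnd_le_Bn[of u] unfolding B_def by (intro mult_mono) auto
    then have "A * B * p * eta \<le> (A + 1) * Bn u * (p + 1) * eta" using eta0 by (intro mult_right_mono) auto
    also have "\<dots> = r / 64" using etaQ unfolding Q_def by (simp add: algebra_simps)
    finally show ?thesis by (simp add: algebra_simps)
  qed
  have ABr: "A * (8 * B * r * r) \<le> r / 8"
  proof -
    have "64 * A * B * r \<le> 64 * A * B * R" using r A0 B0 unfolding R_def by (intro mult_left_mono) auto
    then have "64 * A * B * r \<le> 1" using RA by linarith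
    then have "(64 * A * B * r) * r \<le> 1 * r" using r by (intro mult_right_mono) auto
    then show ?thesis by (simp add: algebra_simps)
  qed
  have main: "\<exists>x\<in>ND u lam. d1 x s \<le> r" if lam: "0 < lam" "lam < l1" for lam
  proof -
    define V where "V = Vset s M rho eta"
    define Rj where "Rj j x = D u j x - (\<Sum>i\<in>M. (x$i - s$i) * E u i j s)" for j x
    define q where "q x l = lam * lg (x$l) - Rj l x" for x l
    define T where "T x = (\<chi> i. if i \<in> M then s$i + (\<Sum>l\<in>M. q x l * G l i) else sig (D u i x / lam))" for x
    have lam1: "lam \<le> 1" "lam \<le> eta * c^2 / 8" "lam \<le> a * r / (8 * (A + 1))"
      using lam(2) unfolding l1_def by auto
    have lamsmall: "8 * lam^2 / c^2 \<le> eta"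
    proof -
      have "8 * lam^2 / c^2 = (8 * lam / c^2) * lam" by (simp add: power2_eq_square)
      also have "\<dots> \<le> eta * lam"
        using lam1(2) c0 lam(1) by (intro mult_right_mono) (auto simp: field_simps)
      also have "\<dots> \<le> eta" using lam1(1) eta0 by (simp add: mult_left_le)
      finally show ?thesis .
    qed
    have V_d1: "d1 x s \<le> r" if x: "x \<in> V" for x
    proof -
      have "(\<Sum>i\<in>-M. \<bar>x$i - s$i\<bar>) \<le> p * eta"
        unfolding p_def using x by (intro sum_le_card_bound) (auto simp: V_def Vset_def)
      moreover have "(\<Sum>i\<in>M. \<bar>x$i - s$i\<bar>) \<le> rho" using x by (auto simp: V_def Vset_def)
      ultimately show ?thesis using d1_split[of x s M] peta r unfolding rho_def by linarith
    qed
    have V_D: "x \<in> \<Delta>" if "x \<in> V" for x using that by (simp add: V_def Vset_def)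
    have V_R: "d1 x s \<le> R" if "x \<in> V" for x using V_d1[OF that] r unfolding R_def by linarith
    have V_nf: "\<forall>j\<in>M. a \<le> x$j \<and> x$j \<le> 1 - a" if "x \<in> V" for x
      using near_facts(1)[OF g V_D[OF that] V_R[OF that, unfolded R_def]] unfolding M_def .
    have sV: "s \<in> V" using gf(1) eta0 r unfolding V_def Vset_def rho_def by simp
    have qb: "\<bar>q x l\<bar> \<le> 2 * lam / a + 8 * B * r * r + 4 * B * (p * eta)" if x: "x \<in> V" and l: "l \<in> M" for x l
    proof -
      have xD: "x \<in> \<Delta>" by (rule V_D[OF x])
      have "\<bar>lg (x$l)\<bar> \<le> 2 / a" using V_nf[OF x] l a0 by (intro lg_bound) auto
      then have "lam * \<bar>lg (x$l)\<bar> \<le> lam * (2 / a)" using lam(1) by (intro mult_left_mono) auto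
      then have t1: "\<bar>lam * lg (x$l)\<bar> \<le> 2 * lam / a" using lam(1) by (simp add: abs_mult mult.commute)
      have L: "\<bar>D u l x - D u l s - (\<Sum>i\<in>M. (x$i - s$i) * E u i l s)\<bar>
         \<le> 8 * Bnd u * (d1 x s + d1 s s) * d1 x s + 4 * Bnd u * (\<Sum>i\<in>-M. \<bar>x$i - s$i\<bar>)"
        by (rule Lin[OF gf(1) xD gf(1)])
      have Ds: "D u l s = 0" using gf(4)[OF l] by blast
      have dss: "d1 s s = 0" by (simp add: d1_def)
      have sP: "(\<Sum>i\<in>-M. \<bar>x$i - s$i\<bar>) \<le> p * eta"
        unfolding p_def using x by (intro sum_le_card_bound) (auto simp: V_def Vset_def)
      have dd: "d1 x s * d1 x s \<le> r * r" using V_d1[OF x] d1_nonneg[of x s] by (intro mult_mono) auto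
      have m1: "(8 * B) * (d1 x s * d1 x s) \<le> (8 * B) * (r * r)" using dd B0 by (intro mult_left_mono) auto
      have m2: "(4 * B) * (\<Sum>i\<in>-M. \<bar>x$i - s$i\<bar>) \<le> (4 * B) * (p * eta)" using sP B0 by (intro mult_left_mono) auto
      have "\<bar>Rj l x\<bar> \<le> (8 * B) * (d1 x s * d1 x s) + (4 * B) * (\<Sum>i\<in>-M. \<bar>x$i - s$i\<bar>)"
        using L unfolding Ds dss Rj_def B_def by (simp add: mult.assoc)
      then have t2: "\<bar>Rj l x\<bar> \<le> 8 * B * r * r + 4 * B * (p * eta)"
        using m1 m2 by (simp add: mult.assoc)
      show ?thesis unfolding q_def using t1 t2 by linarith
    qed
    have T_pure: "\<bar>T x $ k - s$k\<bar> \<le> eta" "0 \<le> T x $ k" "T x $ k \<le> 1" if x: "x \<in> V" and k: "k \<notin> M" for x k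
    proof -
      have "T x $ k = sig (D u k x / lam)" using k by (simp add: T_def)
      moreover have "\<bar>sig (D u k x / lam) - s$k\<bar> \<le> 8 * lam^2 / c^2"
        using pure_bound[OF g V_D[OF x] V_R[OF x, unfolded R_def] k[unfolded M_def] lam(1)] .
      ultimately show "\<bar>T x $ k - s$k\<bar> \<le> eta" "0 \<le> T x $ k" "T x $ k \<le> 1"
        using lamsmall sig_pos[of "D u k x / lam"] sig_lt1[of "D u k x / lam"] by auto
    qed
    have T_mix: "(\<Sum>i\<in>M. \<bar>T x $ i - s$i\<bar>) \<le> rho" if x: "x \<in> V" for x
    proof -
      have "(\<Sum>i\<in>M. \<bar>T x $ i - s$i\<bar>) = (\<Sum>i\<in>M. \<bar>\<Sum>l\<in>M. q x l * G l i\<bar>)"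
        by (intro sum.cong) (auto simp: T_def)
      also have "\<dots> \<le> K * (\<Sum>l\<in>M. \<bar>q x l\<bar>)" unfolding K_def by (rule KG_bound) simp
      also have "\<dots> \<le> K * (\<Sum>l\<in>M. 2 * lam / a + 8 * B * r * r + 4 * B * (p * eta))"
        using qb[OF x] K0 by (intro mult_left_mono sum_mono) auto
      also have "\<dots> = A * (2 * lam / a) + A * (8 * B * r * r) + A * (4 * B * (p * eta))"
        unfolding AKm by (simp add: algebra_simps)
      also have "\<dots> \<le> r / 4 + r / 8 + r / 16"
      proof -
        have "A * (2 * lam / a) \<le> r / 4"
        proof -
          have "lam * (8 * (A + 1)) \<le> a * r" using lam1(3) A0 by (simp add: pos_le_divide_eq)
          moreover have "A * (2 * lam) \<le> (A + 1) * (2 * lam)" using lam(1) by (intro mult_right_mono) auto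
          ultimately have "A * (2 * lam) \<le> a * r / 4" by (simp add: algebra_simps)
          then show ?thesis using a0 by (simp add: field_simps)
        qed
        then show ?thesis using ABr ABpeta by linarith
      qed
      also have "\<dots> \<le> rho" unfolding rho_def using r by simp
      finally show ?thesis .
    qed
    have T_mix_coord: "\<bar>T x $ i - s$i\<bar> \<le> rho" if x: "x \<in> V" and i: "i \<in> M" for x i
      using T_mix[OF x] member_le_sum[of i M "\<lambda>i. \<bar>T x $ i - s$i\<bar>"] i by auto
    have TV: "T x \<in> V" if x: "x \<in> V" for x
    proof -
      have "T x \<in> \<Delta>"
        unfolding mixed_profiles_def
      proof (intro CollectI allI)
        fix i
        show "0 \<le> T x $ i \<and> T x $ i \<le> 1"
        proof (cases "i \<in> M")
          case True
          have "\<bar>T x $ i - s$i\<bar> \<le> rho" by (rule T_mix_coord[OF x True])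
          moreover have "rho \<le> a" using r RA unfolding rho_def R_def by linarith
          moreover have "2*a \<le> s$i \<and> s$i \<le> 1 - 2*a" using gf(4)[OF True] by blast
          ultimately show ?thesis using a0 by (auto simp: abs_le_iff)
        next
          case False then show ?thesis using T_pure[OF x] by blast
        qed
      qed
      then show ?thesis using T_mix[OF x] T_pure(1)[OF x] unfolding V_def Vset_def by auto
    qed
    have contT: "continuous_on V T"
      unfolding T_def q_def Rj_def lg_def
    proof (intro continuous_on_vec_lambda)
      fix i
      show "continuous_on V (\<lambda>x. if i \<in> M then s$i + (\<Sum>l\<in>M. (lam * (ln (x$l) - ln (1 - x$l)) -
              (D u l x - (\<Sum>i\<in>M. (x$i - s$i) * E u i l s))) * G l i) else sig (D u i x / lam))"
      proof (cases "i \<in> M")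
        case True
        have pos: "\<forall>x\<in>V. x$l \<noteq> 0 \<and> 1 - x$l \<noteq> 0" if "l \<in> M" for l
          using V_nf that a0 by fastforce
        show ?thesis using True pos
          by (simp, intro continuous_intros) (auto intro!: continuous_intros)
      next
        case False
        then show ?thesis using lam(1) by (simp, intro continuous_intros) auto
      qed
    qed
    have cV: "compact V" unfolding V_def by (rule compact_Vset)
    have cvV: "convex V" unfolding V_def by (rule convex_Vset)
    have neV: "V \<noteq> {}" using sV by blast
    have TVpi: "T \<in> V \<rightarrow> V" using TV by blast
    obtain x where xV: "x \<in> V" and fx: "T x = x"
      using brouwer[OF cV cvV neV contT TVpi] by blast
    have Tnth: "T x $ i = (if i \<in> M then s$i + (\<Sum>l\<in>M. q x l * G l i) else sig (D u i x / lam))" for i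
      unfolding T_def by (rule vec_lambda_beta)
    have fxi: "x$i = T x $ i" for i using fx by simp
    have xD: "x \<in> \<Delta>" by (rule V_D[OF xV])
    have coords: "x$i = sig (D u i x / lam)" for i
    proof (cases "i \<in> M")
      case False
      then show ?thesis using fxi[of i] Tnth[of i] by simp
    next
      case True
      have xi: "x$i' - s$i' = (\<Sum>l\<in>M. q x l * G l i')" if "i' \<in> M" for i'
        using fxi[of i'] Tnth[of i'] that by simp
      have "(\<Sum>i'\<in>M. (x$i' - s$i') * E u i' i s) = (\<Sum>i'\<in>M. (\<Sum>l\<in>M. q x l * G l i') * E u i' i s)"
        using xi by (intro sum.cong) auto
      also have "\<dots> = q x i" by (rule inv_solve[OF _ gf(7) True]) simp
      finally have "D u i x = lam * lg (x$i)" unfolding q_def Rj_def by simp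
      then have "D u i x / lam = lg (x$i)" using lam(1) by simp
      moreover have "0 < x$i" "x$i < 1" using V_nf[OF xV] True a0 by fastforce+
      ultimately show ?thesis using sig_lg by simp
    qed
    have "x \<in> ND u lam" unfolding ND_def using xD coords by (simp add: vec_eq_iff logitBR_nth)
    then show ?thesis using V_d1[OF xV] by blast
  qed
  show ?thesis using l1p main by blast
qed

lemma local_all:
  assumes sNE: "s \<in> NE u" and reg: "regular_NE u s"
  shows "\<exists>R>0. (\<forall>y\<in>NE u. d1 y s < R \<longrightarrow> y = s) \<and>
     (\<exists>lu>0. \<forall>lam x y. 0 < lam \<longrightarrow> lam < lu \<longrightarrow> x \<in> ND u lam \<longrightarrow> y \<in> ND u lam \<longrightarrow>
           d1 x s \<le> R \<longrightarrow> d1 y s \<le> R \<longrightarrow> x = y) \<and>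
     (\<forall>r. 0 < r \<longrightarrow> r \<le> R \<longrightarrow> (\<exists>l1>0. \<forall>lam. 0 < lam \<longrightarrow> lam < l1 \<longrightarrow> (\<exists>x\<in>ND u lam. d1 x s \<le> r)))"
proof -
  obtain a c G where g: "good u s a c G" using good_exists[OF sNE reg] by blast
  show ?thesis
    using r0_props(1)[OF g] isolation[OF g] uniqueness[OF g] existence[OF g]
    by (intro exI[of _ "r0 u s a c G"]) (auto simp: less_imp_le)
qed

lemma NE_closed_form: "NE u = \<Delta> \<inter> {x. phi u x = 0}"
  using phi_NE by (auto simp: NE_def)

lemma compact_NE: "compact (NE u)"
proof -
  have "closed {x :: real^'a. phi u x = 0}"
    by (intro closed_Collect_eq continuous_on_phi continuous_intros)
  then show ?thesis unfolding NE_closed_form by (intro compact_Int_closed compact_Delta)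
qed

lemma finite_NE:
  assumes reg: "regular_game u"
  shows "finite (NE u)"
proof -
  have "\<forall>s\<in>NE u. \<exists>R>0. \<forall>y\<in>NE u. d1 y s < R \<longrightarrow> y = s"
    using local_all reg unfolding regular_game_def by blast
  then obtain R where R: "\<forall>s\<in>NE u. R s > 0 \<and> (\<forall>y\<in>NE u. d1 y s < R s \<longrightarrow> y = s)"
    by metis
  have opn: "open {x. d1 x s < R s}" for s
    by (intro open_Collect_less continuous_on_d1 continuous_intros)
  have cov: "NE u \<subseteq> (\<Union>s\<in>NE u. {x. d1 x s < R s})"
  proof
    fix y assume "y \<in> NE u"
    moreover have "d1 y y = 0" by (simp add: d1_def)
    ultimately show "y \<in> (\<Union>s\<in>NE u. {x. d1 x s < R s})" using R by force
  qed
  obtain C where C: "C \<subseteq> NE u" "finite C" "NE u \<subseteq> (\<Union>s\<in>C. {x. d1 x s < R s})"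
    using compactE_image[OF compact_NE opn cov] by blast
  have "NE u \<subseteq> C"
  proof
    fix y assume y: "y \<in> NE u"
    then obtain s where s: "s \<in> C" "d1 y s < R s" using C(3) by blast
    then have "y = s" using R C(1) y by blast
    then show "y \<in> C" using s by simp
  qed
  then show ?thesis using C(2) finite_subset by blast
qed

lemma phi_ND:
  fixes x :: "real^'n::finite"
  assumes lam: "0 < lam" and x: "x \<in> ND u lam"
  shows "phi u x \<le> real CARD('n) * lam"
proof -
  have t: "max 0 (D u i x) * (1 - x$i) + max 0 (- D u i x) * x$i \<le> lam" for i :: 'n
  proof -
    have xi: "x$i = sig (D u i x / lam)" by (rule ND_D(2)[OF x])
    define z where "z = D u i x / lam"
    have Dz: "D u i x = lam * z" unfolding z_def using lam by simp
    show ?thesis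
    proof (cases "0 \<le> D u i x")
      case True
      then have z0: "0 \<le> z" unfolding z_def using lam by simp
      have "max 0 (D u i x) * (1 - x$i) + max 0 (- D u i x) * x$i = lam * (z * sig (- z))"
        using True unfolding xi z_def[symmetric] Dz one_minus_sig by simp
      also have "\<dots> \<le> lam * 1" using z_sig_bound[OF z0] lam by (intro mult_left_mono) auto
      finally show ?thesis by simp
    next
      case False
      then have z0: "0 \<le> - z" unfolding z_def using lam by (simp add: divide_nonpos_pos)
      have "max 0 (D u i x) * (1 - x$i) + max 0 (- D u i x) * x$i = lam * ((- z) * sig (- (- z)))"
        using False unfolding xi z_def[symmetric] Dz by simp
      also have "\<dots> \<le> lam * 1" using z_sig_bound[OF z0] lam by (intro mult_left_mono) auto
      finally show ?thesis by simp
    qed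
  qed
  have "phi u x \<le> (\<Sum>i\<in>(UNIV::'n set). lam)" unfolding phi_def by (intro sum_mono t)
  then show ?thesis by simp
qed

lemma continuous_on_logitBR:
  "continuous_on ({0<..} \<times> UNIV) (\<lambda>p. logitBR u (fst p) (snd p))"
proof -
  have ne: "exp a + exp b \<noteq> 0" for a b :: real by (smt (verit) exp_gt_zero)
  show ?thesis unfolding logitBR_def Upure_def
    by (intro continuous_intros) (auto simp: ne)
qed

lemma phi_nonneg: "x \<in> \<Delta> \<Longrightarrow> 0 \<le> phi u x"
  unfolding phi_def mixed_profiles_def
  by (intro sum_nonneg add_nonneg_nonneg mult_nonneg_nonneg) auto

lemma dist_le_d1: "dist x s \<le> d1 x s"
  unfolding dist_norm d1_def using norm_le_l1_cart[of "x - s"] by simp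

theorem theorem3:
  fixes ui :: "'n::finite \<Rightarrow> ('n \<Rightarrow> bool) \<Rightarrow> real"
    and u :: "('n \<Rightarrow> bool) \<Rightarrow> real"
  assumes "is_potential ui u"
    and "regular_game u"
  shows "finite (NE u) \<and>
    (\<exists>lam0>0. \<exists>xl :: real^'n \<Rightarrow> real \<Rightarrow> real^'n.
       (\<forall>xs\<in>NE u. continuous_on {0<..<lam0} (xl xs) \<and> xl xs ` {0<..<lam0} \<subseteq> \<Delta>) \<and>
       (\<forall>lam\<in>{0<..<lam0}. inj_on (\<lambda>xs. xl xs lam) (NE u) \<and>
            ND u lam = (\<lambda>xs. xl xs lam) ` NE u \<and> finite (ND u lam)) \<and>
       (\<forall>xs\<in>NE u. (xl xs \<longlongrightarrow> xs) (at_right 0)))"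
proof -
  define S where "S = NE u"
  have finS: "finite S" unfolding S_def by (rule finite_NE[OF assms(2)])
  have EX1: "\<forall>s\<in>S. \<exists>R>0. (\<exists>lu>0. \<forall>lam x y. 0 < lam \<longrightarrow> lam < lu \<longrightarrow> x \<in> ND u lam \<longrightarrow> y \<in> ND u lam \<longrightarrow>
           d1 x s \<le> R \<longrightarrow> d1 y s \<le> R \<longrightarrow> x = y) \<and>
     (\<forall>r. 0 < r \<longrightarrow> r \<le> R \<longrightarrow> (\<exists>l1>0. \<forall>lam. 0 < lam \<longrightarrow> lam < l1 \<longrightarrow> (\<exists>x\<in>ND u lam. d1 x s \<le> r)))"
    using local_all assms(2) unfolding regular_game_def S_def by blast
  obtain R where RR: "\<forall>s\<in>S. 0 < R s \<and> (\<exists>lu>0. \<forall>lam x y. 0 < lam \<longrightarrow> lam < lu \<longrightarrow> x \<in> ND u lam \<longrightarrow> y \<in> ND u lam \<longrightarrow>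
           d1 x s \<le> R s \<longrightarrow> d1 y s \<le> R s \<longrightarrow> x = y) \<and>
     (\<forall>r. 0 < r \<longrightarrow> r \<le> R s \<longrightarrow> (\<exists>l1>0. \<forall>lam. 0 < lam \<longrightarrow> lam < l1 \<longrightarrow> (\<exists>x\<in>ND u lam. d1 x s \<le> r)))"
    using bchoice[OF EX1] by blast
  have R: "\<And>s. s \<in> S \<Longrightarrow> R s > 0" using RR by blast
  have Re: "\<And>s r. s \<in> S \<Longrightarrow> 0 < r \<Longrightarrow> r \<le> R s \<Longrightarrow> (\<exists>l1>0. \<forall>lam. 0 < lam \<longrightarrow> lam < l1 \<longrightarrow> (\<exists>x\<in>ND u lam. d1 x s \<le> r))"
    using RR by blast
  have EX2: "\<forall>s\<in>S. \<exists>lu>0. \<forall>lam x y. 0 < lam \<longrightarrow> lam < lu \<longrightarrow> x \<in> ND u lam \<longrightarrow> y \<in> ND u lam \<longrightarrow>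
           d1 x s \<le> R s \<longrightarrow> d1 y s \<le> R s \<longrightarrow> x = y" using RR by blast
  obtain lu where LU: "\<forall>s\<in>S. lu s > 0 \<and> (\<forall>lam x y. 0 < lam \<longrightarrow> lam < lu s \<longrightarrow> x \<in> ND u lam \<longrightarrow> y \<in> ND u lam \<longrightarrow>
           d1 x s \<le> R s \<longrightarrow> d1 y s \<le> R s \<longrightarrow> x = y)"
    using bchoice[OF EX2] by blast
  have lu: "\<And>s. s \<in> S \<Longrightarrow> lu s > 0" using LU by blast
  have luu: "\<And>s lam x y. s \<in> S \<Longrightarrow> 0 < lam \<Longrightarrow> lam < lu s \<Longrightarrow> x \<in> ND u lam \<Longrightarrow> y \<in> ND u lam \<Longrightarrow>
           d1 x s \<le> R s \<Longrightarrow> d1 y s \<le> R s \<Longrightarrow> x = y"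
    using LU by blast
  define sep where "sep = Min (insert 1 ((\<lambda>(s,t). d1 s t) ` {(s,t). s \<in> S \<and> t \<in> S \<and> s \<noteq> t}))"
  have finP: "finite {(s,t). s \<in> S \<and> t \<in> S \<and> s \<noteq> t}"
    by (rule finite_subset[of _ "S \<times> S"]) (use finS in auto)
  have sep0: "0 < sep"
  proof -
    have "\<forall>v\<in>insert 1 ((\<lambda>(s,t). d1 s t) ` {(s,t). s \<in> S \<and> t \<in> S \<and> s \<noteq> t}). 0 < v"
      using d1_nonneg d1_zero by (force simp: order_le_less)
    then show ?thesis unfolding sep_def using finP by (subst Min_gr_iff) auto
  qed
  have sep_le: "sep \<le> d1 s t" if "s \<in> S" "t \<in> S" "s \<noteq> t" for s t
    unfolding sep_def using finP that by (intro Min_le) force+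
  define Rs where "Rs s = min (R s) (sep / 3)" for s
  have Rs0: "0 < Rs s" if "s \<in> S" for s using R[OF that] sep0 by (simp add: Rs_def)
  have RsR: "Rs s \<le> R s" for s by (simp add: Rs_def)
  have EX3: "\<forall>s\<in>S. \<exists>l1>0. \<forall>lam. 0 < lam \<longrightarrow> lam < l1 \<longrightarrow> (\<exists>x\<in>ND u lam. d1 x s \<le> Rs s)"
    using Re Rs0 RsR by blast
  obtain le where LE: "\<forall>s\<in>S. le s > 0 \<and> (\<forall>lam. 0 < lam \<longrightarrow> lam < le s \<longrightarrow> (\<exists>x\<in>ND u lam. d1 x s \<le> Rs s))"
    using bchoice[OF EX3] by blast
  have le: "\<And>s. s \<in> S \<Longrightarrow> le s > 0" using LE by blast
  have lee: "\<And>s lam. s \<in> S \<Longrightarrow> 0 < lam \<Longrightarrow> lam < le s \<Longrightarrow> (\<exists>x\<in>ND u lam. d1 x s \<le> Rs s)"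
    using LE by blast
  define Kset where "Kset = \<Delta> \<inter> (\<Inter>s\<in>S. {x. Rs s \<le> d1 x s})"
  have cK: "compact Kset"
  proof -
    have "closed (\<Inter>s\<in>S. {x :: real^'n. Rs s \<le> d1 x s})"
      by (intro closed_INT ballI closed_Collect_le continuous_on_d1 continuous_intros)
    then show ?thesis unfolding Kset_def by (intro compact_Int_closed compact_Delta)
  qed
  have phiK: "0 < phi u x" if "x \<in> Kset" for x
  proof -
    have xD: "x \<in> \<Delta>" using that by (simp add: Kset_def)
    have "x \<notin> NE u"
    proof
      assume "x \<in> NE u"
      then have "Rs x \<le> d1 x x" "0 < Rs x" using that Rs0 by (auto simp: Kset_def S_def)
      moreover have "d1 x x = 0" by (simp add: d1_def)
      ultimately show False by simp
    qed
    then have "phi u x \<noteq> 0" using phi_NE[OF xD] by simp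
    then show ?thesis using phi_nonneg[OF xD, of u] by simp
  qed
  obtain m where m0: "0 < m" and mK: "\<And>y. y \<in> Kset \<Longrightarrow> m \<le> phi u y"
  proof (cases "Kset = {}")
    case True then show ?thesis using that[of 1] by simp
  next
    case False
    obtain x0 where "x0 \<in> Kset" "\<forall>y\<in>Kset. phi u x0 \<le> phi u y"
      using continuous_attains_inf[OF cK False continuous_on_phi] by blast
    then show ?thesis using that[of "phi u x0"] phiK by blast
  qed
  define N where "N = real CARD('n)"
  define lam0 where "lam0 = min (m / (N + 1)) (Min (insert 1 ((\<lambda>s. min (lu s) (le s)) ` S)))"
  have lam0p: "0 < lam0"
  proof -
    have "0 < Min (insert 1 ((\<lambda>s. min (lu s) (le s)) ` S))"
      using finS lu le by (subst Min_gr_iff) auto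
    moreover have "0 < m / (N + 1)" using m0 by (simp add: N_def)
    ultimately show ?thesis by (simp add: lam0_def)
  qed
  have lam0_le: "lam0 \<le> lu s" "lam0 \<le> le s" if "s \<in> S" for s
  proof -
    have "lam0 \<le> Min (insert 1 ((\<lambda>s. min (lu s) (le s)) ` S))" by (simp add: lam0_def)
    also have "\<dots> \<le> min (lu s) (le s)" using finS that by (intro Min_le) auto
    finally show "lam0 \<le> lu s" "lam0 \<le> le s" by auto
  qed
  define xl where "xl s lam = (THE x. x \<in> ND u lam \<and> d1 x s \<le> Rs s)" for s lam
  have key: "xl s lam \<in> ND u lam \<and> d1 (xl s lam) s \<le> Rs s \<and> (\<forall>y. y \<in> ND u lam \<and> d1 y s \<le> Rs s \<longrightarrow> y = xl s lam)"
    if s: "s \<in> S" and lam: "0 < lam" "lam < lam0" for s lam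
  proof -
    have l1: "lam < le s" using lam(2) lam0_le(2)[OF s] by linarith
    have l2: "lam < lu s" using lam(2) lam0_le(1)[OF s] by linarith
    obtain x where x: "x \<in> ND u lam" "d1 x s \<le> Rs s" using lee[OF s lam(1) l1] by blast
    have uq: "y = x" if "y \<in> ND u lam" "d1 y s \<le> Rs s" for y
    proof (rule luu[OF s lam(1) l2 that(1) x(1)])
      show "d1 y s \<le> R s" using that(2) RsR[of s] by linarith
      show "d1 x s \<le> R s" using x(2) RsR[of s] by linarith
    qed
    have xe: "xl s lam = x" unfolding xl_def
    proof (rule the_equality)
      show "x \<in> ND u lam \<and> d1 x s \<le> Rs s" using x by blast
      show "y = x" if "y \<in> ND u lam \<and> d1 y s \<le> Rs s" for y using uq that by blast
    qed
    show ?thesis unfolding xe using x uq by blast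
  qed
  have keyA: "xl s lam \<in> ND u lam" and keyB: "d1 (xl s lam) s \<le> Rs s"
    if "s \<in> S" "0 < lam" "lam < lam0" for s lam using key[OF that] by blast+
  have keyC: "y = xl s lam" if "s \<in> S" "0 < lam" "lam < lam0" "y \<in> ND u lam" "d1 y s \<le> Rs s" for s lam y
    using key[OF that(1-3)] that(4-5) by blast
  have part_cont: "continuous_on {0<..<lam0} (xl s)" if s: "s \<in> S" for s
  proof -
    define I where "I = {0<..<lam0}"
    define Ts where "Ts = \<Delta> \<inter> {x. d1 x s \<le> Rs s}"
    have cT: "compact Ts" unfolding Ts_def
      by (intro compact_Int_closed compact_Delta closed_Collect_le continuous_on_d1 continuous_intros)
    have keyI: "xl s lam \<in> ND u lam" "d1 (xl s lam) s \<le> Rs s" if "lam \<in> I" for lam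
      using key[OF s, of lam] that unfolding I_def by auto
    have fim: "xl s \<in> I \<rightarrow> Ts"
    proof
      fix lam assume "lam \<in> I"
      then show "xl s lam \<in> Ts" using keyI[of lam] ND_D(1)[of "xl s lam" u lam] unfolding Ts_def by blast
    qed
    define g where "g p = snd p - logitBR u (fst p) (snd p)" for p :: "real \<times> (real^'n)"
    have contg: "continuous_on (I \<times> Ts) g"
      unfolding g_def
      by (intro continuous_intros continuous_on_subset[OF continuous_on_logitBR]) (auto simp: I_def)
    have eq: "(\<lambda>x. (x, xl s x)) ` I = (I \<times> Ts) \<inter> g -` {0}"
    proof (intro equalityI subsetI)
      fix p assume "p \<in> (\<lambda>x. (x, xl s x)) ` I"
      then obtain lam where lam: "lam \<in> I" "p = (lam, xl s lam)" by blast
      have k: "xl s lam \<in> ND u lam" "d1 (xl s lam) s \<le> Rs s" using keyI[OF lam(1)] by auto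
      then have "xl s lam = logitBR u lam (xl s lam)" "xl s lam \<in> \<Delta>" by (auto simp: ND_def)
      then show "p \<in> (I \<times> Ts) \<inter> g -` {0}" using lam k unfolding g_def Ts_def by auto
    next
      fix p assume p: "p \<in> (I \<times> Ts) \<inter> g -` {0}"
      obtain lam x where px: "p = (lam, x)" by (cases p)
      have lam: "0 < lam" "lam < lam0" using p px unfolding I_def by auto
      have "x \<in> \<Delta>" "d1 x s \<le> Rs s" using p px unfolding Ts_def by auto
      moreover have "x = logitBR u lam x" using p px unfolding g_def by simp
      ultimately have "x \<in> ND u lam \<and> d1 x s \<le> Rs s" by (simp add: ND_def)
      then have "x = xl s lam" using key[OF s lam(1) lam(2)] by blast
      then show "p \<in> (\<lambda>x. (x, xl s x)) ` I" using px p unfolding I_def by auto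
    qed
    have "closedin (top_of_set (I \<times> Ts)) ((I \<times> Ts) \<inter> g -` {0})"
      by (rule continuous_closedin_preimage[OF contg closed_singleton])
    then have "closedin (top_of_set (I \<times> Ts)) ((\<lambda>x. (x, xl s x)) ` I)" unfolding eq .
    then show ?thesis using continuous_closed_graph_eq[OF cT fim] unfolding I_def by blast
  qed
  have part_img: "xl s ` {0<..<lam0} \<subseteq> \<Delta>" if s: "s \<in> S" for s
  proof
    fix y assume "y \<in> xl s ` {0<..<lam0}"
    then obtain lam where "0 < lam" "lam < lam0" "y = xl s lam" by auto
    then show "y \<in> \<Delta>" using keyA[OF s] ND_D(1) by blast
  qed
  have part_inj: "inj_on (\<lambda>s. xl s lam) S" if lam: "0 < lam" "lam < lam0" for lam
  proof (rule inj_onI, rule ccontr)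
    fix s t assume s: "s \<in> S" and t: "t \<in> S" and eq: "xl s lam = xl t lam" and ne: "s \<noteq> t"
    have "d1 s t \<le> d1 s (xl s lam) + d1 (xl s lam) t" by (rule d1_triangle)
    also have "\<dots> \<le> Rs s + Rs t" using keyB[OF s lam] keyB[OF t lam] eq d1_sym[of s "xl s lam"] by simp
    also have "\<dots> \<le> sep / 3 + sep / 3" by (simp add: Rs_def add_mono)
    also have "\<dots> < sep" using sep0 by simp
    finally show False using sep_le[OF s t ne] by simp
  qed
  have part_ND: "ND u lam = (\<lambda>s. xl s lam) ` S" if lam: "0 < lam" "lam < lam0" for lam
  proof (intro equalityI subsetI)
    fix y assume y: "y \<in> ND u lam"
    have yD: "y \<in> \<Delta>" using ND_D(1)[OF y] .
    have "phi u y \<le> N * lam" unfolding N_def by (rule phi_ND[OF lam(1) y])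
    also have "\<dots> \<le> (N + 1) * lam" using lam by (intro mult_right_mono) auto
    also have "\<dots> < m"
    proof -
      have "lam < m / (N + 1)" using lam(2) by (simp add: lam0_def)
      then show ?thesis by (simp add: N_def pos_less_divide_eq mult.commute)
    qed
    finally have "y \<notin> Kset" using mK by force
    then obtain s where s: "s \<in> S" "d1 y s < Rs s" using yD unfolding Kset_def by force
    then have "y = xl s lam" using keyC[OF s(1) lam y] by simp
    then show "y \<in> (\<lambda>s. xl s lam) ` S" using s by blast
  next
    fix y assume "y \<in> (\<lambda>s. xl s lam) ` S"
    then show "y \<in> ND u lam" using keyA lam by blast
  qed
  have part_lim: "(xl s \<longlongrightarrow> s) (at_right 0)" if s: "s \<in> S" for s
  proof (rule tendstoI)
    fix e :: real assume e: "0 < e"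
    define r where "r = min (Rs s) (e / 2)"
    have r0: "0 < r" using Rs0[OF s] e by (simp add: r_def)
    have rR: "r \<le> R s" using RsR[of s] by (simp add: r_def)
    obtain l1 where l1: "l1 > 0" and ex: "\<And>lam. 0 < lam \<Longrightarrow> lam < l1 \<Longrightarrow> \<exists>x\<in>ND u lam. d1 x s \<le> r"
      using Re[OF s r0 rR] by blast
    show "\<forall>\<^sub>F lam in at_right 0. dist (xl s lam) s < e"
      unfolding eventually_at_right_field
    proof (intro exI[of _ "min l1 lam0"] conjI allI impI)
      show "0 < min l1 lam0" using l1 lam0p by simp
      fix lam :: real assume lam: "0 < lam" "lam < min l1 lam0"
      obtain x where x: "x \<in> ND u lam" "d1 x s \<le> r" using ex[of lam] lam by auto
      have "lam < lam0" using lam(2) by simp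
      moreover have "d1 x s \<le> Rs s" using x(2) by (simp add: r_def)
      ultimately have "x = xl s lam" using keyC[OF s lam(1) _ x(1)] by blast
      then have "dist (xl s lam) s \<le> r" using dist_le_d1[of x s] x by simp
      then show "dist (xl s lam) s < e" using e by (simp add: r_def)
    qed
  qed
  show ?thesis
  proof (intro conjI exI[of _ lam0] exI[of _ xl] lam0p ballI)
    show "finite (NE u)" using finS by (simp add: S_def)
  next
    fix xs assume "xs \<in> NE u" then show "continuous_on {0<..<lam0} (xl xs)" using part_cont by (simp add: S_def)
  next
    fix xs assume "xs \<in> NE u" then show "xl xs ` {0<..<lam0} \<subseteq> \<Delta>" using part_img by (simp add: S_def)
  next
    fix lam assume "lam \<in> {0<..<lam0}" then show "inj_on (\<lambda>xs. xl xs lam) (NE u)" using part_inj by (simp add: S_def)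
  next
    fix lam assume "lam \<in> {0<..<lam0}" then show "ND u lam = (\<lambda>xs. xl xs lam) ` NE u" using part_ND by (simp add: S_def)
  next
    fix lam assume "lam \<in> {0<..<lam0}" then show "finite (ND u lam)" using part_ND finS by (simp add: S_def)
  next
    fix xs assume "xs \<in> NE u" then show "(xl xs \<longlongrightarrow> xs) (at_right 0)" using part_lim by (simp add: S_def)
  qed
qed

end
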